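(* Let $X_1,X_2,\ldots$ be i.i.d. real random variables with $\mathbf{E}X_1=0$ and $\mathbf{E}X_1^2=1$, $S_n=X_1+\cdots+X_n$ and $S_n^{(2)}=S_1+\cdots+S_n$. Then there exists a constant $C$ such that for all $n\ge1$ $$\sup_{x,y\in\mathbb{R}}\mathbf{P}\left(|S_n^{(2)}-x|\le1,\ |S_n-y|\le1\right)\le\frac{C}{n^2}\quad\text{and}\quad\sup_{x\in\mathbb{R}}\mathbf{P}\left(|S_n^{(2)}-x|\le1\right)\le\frac{C}{n^{3/2}}.$$ *)

theory Defs
  imports "HOL-Probability.Probability"
begin

text \<open>Partial sums with the paper's indexing shifted: X 0, X 1, ... stand for X_1, X_2, ...
  S_n = X_1 + ... + X_n and S^(2)_n = S_1 + ... + S_n.\<close>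

definition partial_sum :: "(nat \<Rightarrow> 'a \<Rightarrow> real) \<Rightarrow> nat \<Rightarrow> 'a \<Rightarrow> real" where
  "partial_sum X n = (\<lambda>\<omega>. \<Sum>i<n. X i \<omega>)"

definition second_partial_sum :: "(nat \<Rightarrow> 'a \<Rightarrow> real) \<Rightarrow> nat \<Rightarrow> 'a \<Rightarrow> real" where
  "second_partial_sum X n = (\<lambda>\<omega>. \<Sum>k=1..n. partial_sum X k \<omega>)"

end

theory Submission
  imports Defs
begin


lemma cos_ge_half: fixes z :: real assumes "\<bar>z\<bar> \<le> 1" shows "cos z \<ge> 1/2"
proof -
  have "cos (pi/3) \<le> cos \<bar>z\<bar>"
    using assms pi_gt3 by (subst cos_mono_le_eq) auto
  then show ?thesis by (simp add: cos_60 cos_abs_real)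
qed

lemma one_minus_cos_eq: fixes z :: real shows "1 - cos z = 2 * (sin (z/2))\<^sup>2"
  using cos_double_sin[of "z/2"] by simp

lemma one_minus_cos_le: fixes z :: real shows "1 - cos z \<le> z\<^sup>2 / 2"
proof -
  have "\<bar>sin (z/2)\<bar> \<le> \<bar>z/2\<bar>" by (rule abs_sin_x_le_abs_x)
  then have "(sin (z/2))\<^sup>2 \<le> (z/2)\<^sup>2"
    by (metis abs_ge_zero power2_abs power_mono)
  then show ?thesis unfolding one_minus_cos_eq by (simp add: power_divide)
qed

lemma one_minus_cos_nonneg: fixes z :: real shows "0 \<le> 1 - cos z"
  by simp

lemma sin_lower: fixes w :: real assumes "\<bar>w\<bar> \<le> 1/2" shows "\<bar>sin w\<bar> \<ge> \<bar>w\<bar> * (23/24)"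
proof -
  have "\<bar>sin w - (\<Sum>m<3. sin_coeff m * w ^ m)\<bar> \<le> inverse (fact 3) * \<bar>w\<bar> ^ 3"
    by (rule Maclaurin_sin_bound)
  moreover have "(\<Sum>m<3. sin_coeff m * w ^ m) = w"
    by (simp add: sin_coeff_def eval_nat_numeral)
  moreover have "inverse (fact 3 :: real) = 1/6" by (simp add: fact_numeral)
  ultimately have h: "\<bar>sin w - w\<bar> \<le> \<bar>w\<bar> ^ 3 / 6" by simp
  have "\<bar>w\<bar> ^ 3 = \<bar>w\<bar> * \<bar>w\<bar>\<^sup>2" by (simp add: eval_nat_numeral)
  also have "\<dots> \<le> \<bar>w\<bar> * (1/4)"
  proof -
    have "\<bar>w\<bar>\<^sup>2 \<le> (1/2)\<^sup>2" using assms by (intro power_mono) auto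
    then show ?thesis by (intro mult_left_mono) (auto simp: power2_eq_square)
  qed
  finally have "\<bar>sin w - w\<bar> \<le> \<bar>w\<bar> / 24" using h by linarith
  then show ?thesis by linarith
qed

lemma lin_aux2: "(z2::real)*(529/2304) \<le> S \<Longrightarrow> 0 \<le> S \<Longrightarrow> z2/5 \<le> 2*S"
  by linarith

lemma one_minus_cos_ge: fixes z :: real assumes "\<bar>z\<bar> \<le> 1" shows "1 - cos z \<ge> z\<^sup>2 / 5"
proof -
  have "\<bar>sin (z/2)\<bar> \<ge> \<bar>z/2\<bar> * (23/24)" using assms by (intro sin_lower) auto
  then have "(\<bar>z/2\<bar> * (23/24))\<^sup>2 \<le> \<bar>sin (z/2)\<bar>\<^sup>2"
    by (intro power_mono) auto
  moreover have "(z/2)\<^sup>2 * (23/24)\<^sup>2 = (\<bar>z/2\<bar> * (23/24))\<^sup>2"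
    by (simp only: power_mult_distrib power2_abs)
  ultimately have "(z/2)\<^sup>2 * (23/24)\<^sup>2 \<le> (sin (z/2))\<^sup>2" by simp
  moreover have "(z/2)\<^sup>2 * (23/24)\<^sup>2 = z\<^sup>2 * (529/2304)" by (simp add: power_divide)
  ultimately have "z\<^sup>2 * (529/2304) \<le> (sin (z/2))\<^sup>2" by simp
  moreover have "0 \<le> (sin (z/2))\<^sup>2" by simp
  ultimately have "z\<^sup>2 / 5 \<le> 2 * (sin (z/2))\<^sup>2" by (rule lin_aux2)
  then show ?thesis by (simp only: one_minus_cos_eq)
qed

lemma sq_sum_le: fixes x y :: real shows "(x + y)\<^sup>2 \<le> 2 * x\<^sup>2 + 2 * y\<^sup>2"
proof -
  have "(x + y)\<^sup>2 + (x - y)\<^sup>2 = 2 * x\<^sup>2 + 2 * y\<^sup>2" by algebra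
  moreover have "0 \<le> (x - y)\<^sup>2" by simp
  ultimately show ?thesis by linarith
qed

lemma lin_aux: "(L::real) = 2*S \<Longrightarrow> P = 2*A \<Longrightarrow> Q = 2*B \<Longrightarrow> S \<le> 2*A + 2*B \<Longrightarrow> L \<le> 2*P + 2*Q"
  by linarith

lemma one_minus_cos_tri: fixes a b :: real
  shows "1 - cos (a - b) \<le> 2 * (1 - cos a) + 2 * (1 - cos b)"
proof -
  have e: "sin ((a - b)/2) = sin (a/2) * cos (b/2) - cos (a/2) * sin (b/2)"
    using sin_diff[of "a/2" "b/2"] by (simp add: diff_divide_distrib)
  have "\<bar>sin ((a - b)/2)\<bar> \<le> \<bar>sin (a/2)\<bar> + \<bar>sin (b/2)\<bar>"
  proof -
    have "\<bar>sin (a/2) * cos (b/2)\<bar> \<le> \<bar>sin (a/2)\<bar>"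
      by (simp add: abs_mult mult_left_le)
    moreover have "\<bar>cos (a/2) * sin (b/2)\<bar> \<le> \<bar>sin (b/2)\<bar>"
      unfolding abs_mult by (rule mult_left_le_one_le) auto
    ultimately show ?thesis unfolding e by linarith
  qed
  then have "\<bar>sin ((a - b)/2)\<bar>\<^sup>2 \<le> (\<bar>sin (a/2)\<bar> + \<bar>sin (b/2)\<bar>)\<^sup>2"
    by (intro power_mono) auto
  also have "\<dots> \<le> 2 * \<bar>sin (a/2)\<bar>\<^sup>2 + 2 * \<bar>sin (b/2)\<bar>\<^sup>2"
    by (rule sq_sum_le)
  finally have "(sin ((a-b)/2))\<^sup>2 \<le> 2*(sin(a/2))\<^sup>2 + 2*(sin (b/2))\<^sup>2" by (simp only: power2_abs)
  note aux = lin_aux[OF one_minus_cos_eq[of "a-b"] one_minus_cos_eq[of a] one_minus_cos_eq[of b] this]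
  then show ?thesis .
qed




lemma pair_bound:
  fixes \<psi> :: "real \<Rightarrow> real" and \<alpha> \<beta> :: real and b n :: nat
  assumes nonneg: "\<And>u. \<psi> u \<ge> 0" and tri: "\<And>u v. \<psi> (u - v) \<le> 2 * \<psi> u + 2 * \<psi> v"
    and "b \<le> n"
  shows "real (n - b) * \<psi> (\<alpha> * real b) \<le> 4 * (\<Sum>a=1..n. \<psi> (\<alpha> * real a + \<beta>))"
proof -
  let ?S = "\<Sum>a=1..n. \<psi> (\<alpha> * real a + \<beta>)"
  have step: "\<psi> (\<alpha> * real b) \<le> 2 * \<psi> (\<alpha> * real (a + b) + \<beta>) + 2 * \<psi> (\<alpha> * real a + \<beta>)" for a
  proof -
    have "\<alpha> * real b = (\<alpha> * real (a + b) + \<beta>) - (\<alpha> * real a + \<beta>)" by (simp add: algebra_simps)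
    then show ?thesis using tri[of "\<alpha> * real (a + b) + \<beta>" "\<alpha> * real a + \<beta>"] by simp
  qed
  have "real (n - b) * \<psi> (\<alpha> * real b) = (\<Sum>a=1..n-b. \<psi> (\<alpha> * real b))" by simp
  also have "\<dots> \<le> (\<Sum>a=1..n-b. 2 * \<psi> (\<alpha> * real (a + b) + \<beta>) + 2 * \<psi> (\<alpha> * real a + \<beta>))"
    by (intro sum_mono step)
  also have "\<dots> = 2 * (\<Sum>a=1..n-b. \<psi> (\<alpha> * real (a + b) + \<beta>)) + 2 * (\<Sum>a=1..n-b. \<psi> (\<alpha> * real a + \<beta>))"
    by (simp add: sum.distrib sum_distrib_left)
  also have "(\<Sum>a=1..n-b. \<psi> (\<alpha> * real (a + b) + \<beta>)) = (\<Sum>a=1+b..n-b+b. \<psi> (\<alpha> * real a + \<beta>))"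
    by (rule sum.shift_bounds_cl_nat_ivl[symmetric])
  also have "\<dots> \<le> ?S"
    using assms(3) by (intro sum_mono2 nonneg) auto
  also have "(\<Sum>a=1..n-b. \<psi> (\<alpha> * real a + \<beta>)) \<le> ?S"
    by (intro sum_mono2 nonneg) auto
  finally show ?thesis by simp
qed

lemma lin3: "P \<le> Qb \<Longrightarrow> A = P \<Longrightarrow> Qb = R/4 \<Longrightarrow> 0 \<le> R \<Longrightarrow> Qb \<le> S \<Longrightarrow> (A + R)/360 \<le> (S::real)"
  by (simp add: field_simps)

lemma quad_lower:
  fixes \<alpha> \<beta> :: real and n :: nat
  assumes "n \<ge> 2"
  shows "(real n ^ 3 * \<alpha>\<^sup>2 + real n * \<beta>\<^sup>2) / 360 \<le> (\<Sum>a=1..n. (\<alpha> * real a + \<beta>)\<^sup>2)"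
proof (cases "\<bar>\<beta>\<bar> \<ge> 2 * \<bar>\<alpha>\<bar> * real n")
  case True
  have each: "\<beta>\<^sup>2 / 4 \<le> (\<alpha> * real a + \<beta>)\<^sup>2" if "a \<in> {1..n}" for a
  proof -
    have "\<bar>\<alpha> * real a\<bar> \<le> \<bar>\<alpha>\<bar> * real n" using that by (simp add: abs_mult mult_left_mono)
    then have "\<bar>\<beta>\<bar> / 2 \<le> \<bar>\<alpha> * real a + \<beta>\<bar>" using True by linarith
    then have "(\<bar>\<beta>\<bar> / 2)\<^sup>2 \<le> \<bar>\<alpha> * real a + \<beta>\<bar>\<^sup>2" by (intro power_mono) auto
    then show ?thesis by (simp add: power_divide)
  qed
  have "real n * (\<beta>\<^sup>2 / 4) = (\<Sum>a=1..n. \<beta>\<^sup>2 / 4)" by simp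
  also have "\<dots> \<le> (\<Sum>a=1..n. (\<alpha> * real a + \<beta>)\<^sup>2)" by (intro sum_mono each)
  finally have S: "real n * (\<beta>\<^sup>2 / 4) \<le> (\<Sum>a=1..n. (\<alpha> * real a + \<beta>)\<^sup>2)" .
  have "(\<bar>\<alpha>\<bar> * real n)\<^sup>2 \<le> (\<bar>\<beta>\<bar> / 2)\<^sup>2" using True by (intro power_mono) auto
  then have "\<alpha>\<^sup>2 * (real n)\<^sup>2 \<le> \<beta>\<^sup>2 / 4" by (simp add: power_mult_distrib power_divide)
  then have "real n * (\<alpha>\<^sup>2 * (real n)\<^sup>2) \<le> real n * (\<beta>\<^sup>2 / 4)" by (intro mult_left_mono) auto
  moreover have "real n ^ 3 * \<alpha>\<^sup>2 = real n * (\<alpha>\<^sup>2 * (real n)\<^sup>2)" by (simp add: power2_eq_square power3_eq_cube)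
  moreover have "real n * (\<beta>\<^sup>2 / 4) = real n * \<beta>\<^sup>2 / 4" by simp
  moreover have "0 \<le> real n * \<beta>\<^sup>2" by simp
  ultimately show ?thesis using S by (intro lin3[of "real n * (\<alpha>\<^sup>2 * (real n)\<^sup>2)" "real n * (\<beta>\<^sup>2 / 4)"]) auto
next
  case False
  define b where "b = n div 2"
  have "n \<le> 3 * b" using assms unfolding b_def by presburger
  then have "real n \<le> 3 * real b" by (metis of_nat_le_iff of_nat_mult of_nat_numeral)
  then have b1: "real n / 3 \<le> real b" by linarith
  have b2: "real n / 2 \<le> real (n - b)" unfolding b_def by linarith
  have pb: "real (n - b) * (\<alpha> * real b)\<^sup>2 \<le> 4 * (\<Sum>a=1..n. (\<alpha> * real a + \<beta>)\<^sup>2)"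
    by (rule pair_bound) (auto simp: b_def sq_sum_le[of _ "- _", simplified])
  have "(\<bar>\<alpha>\<bar> * (real n / 3))\<^sup>2 \<le> (\<bar>\<alpha>\<bar> * real b)\<^sup>2"
    using b1 by (intro power_mono mult_left_mono) auto
  then have h1: "\<alpha>\<^sup>2 * (real n)\<^sup>2 / 9 \<le> (\<alpha> * real b)\<^sup>2" by (simp add: power_mult_distrib power_divide)
  have "real n / 2 * (\<alpha>\<^sup>2 * (real n)\<^sup>2 / 9) \<le> real (n - b) * (\<alpha> * real b)\<^sup>2"
    using b2 h1 by (intro mult_mono) auto
  moreover have "real n / 2 * (\<alpha>\<^sup>2 * (real n)\<^sup>2 / 9) = real n ^ 3 * \<alpha>\<^sup>2 / 18"
    by (simp add: power2_eq_square power3_eq_cube)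
  ultimately have "real n ^ 3 * \<alpha>\<^sup>2 / 18 \<le> 4 * (\<Sum>a=1..n. (\<alpha> * real a + \<beta>)\<^sup>2)"
    using pb by linarith
  then have "real n ^ 3 * \<alpha>\<^sup>2 \<le> 72 * (\<Sum>a=1..n. (\<alpha> * real a + \<beta>)\<^sup>2)"
    by simp
  moreover have "real n * \<beta>\<^sup>2 \<le> 4 * (real n ^ 3 * \<alpha>\<^sup>2)"
  proof -
    have "\<bar>\<beta>\<bar>\<^sup>2 \<le> (2 * \<bar>\<alpha>\<bar> * real n)\<^sup>2" using False by (intro power_mono) auto
    then have "\<beta>\<^sup>2 \<le> 4 * \<alpha>\<^sup>2 * (real n)\<^sup>2" by (simp add: power_mult_distrib)
    then have "real n * \<beta>\<^sup>2 \<le> real n * (4 * \<alpha>\<^sup>2 * (real n)\<^sup>2)" by (intro mult_left_mono) auto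
    then show ?thesis by (simp add: power2_eq_square power3_eq_cube algebra_simps)
  qed
  ultimately show ?thesis by (simp add: field_simps)
qed




locale psi_fun =
  fixes \<psi> :: "real \<Rightarrow> real" and k0 d0 B :: real
  assumes nonneg: "\<And>u. \<psi> u \<ge> 0"
    and tri: "\<And>u v. \<psi> (u - v) \<le> 2 * \<psi> u + 2 * \<psi> v"
    and low: "\<And>u. \<bar>u\<bar> \<le> d0 \<Longrightarrow> k0 * u\<^sup>2 \<le> \<psi> u"
    and up: "\<And>u. \<psi> u \<le> B * u\<^sup>2"
    and k0: "k0 > 0" and d0: "d0 > 0" and B: "B > 0"
begin

definition "eta = d0 * min (1/2) (k0 / (16 * B))"

lemma eta_pos: "eta > 0" using k0 d0 B by (simp add: eta_def)

lemma eta_le: "eta \<le> d0 / 2" using d0 by (simp add: eta_def)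

lemma eta_sq: "B * eta\<^sup>2 \<le> k0 * d0\<^sup>2 / 32"
proof -
  define e where "e = min (1/2) (k0 / (16 * B))"
  have e0: "0 < e" "e \<le> 1/2" "e \<le> k0 / (16 * B)" using k0 B by (auto simp: e_def)
  have "e\<^sup>2 \<le> e * (1/2)" using e0 by (simp add: power2_eq_square mult_left_mono)
  also have "\<dots> \<le> k0 / (16 * B) * (1/2)" using e0 by simp
  finally have "B * e\<^sup>2 \<le> B * (k0 / (32 * B))" using B by (intro mult_left_mono) auto
  then have "B * e\<^sup>2 \<le> k0 / 32" using B by simp
  then have "B * e\<^sup>2 * d0\<^sup>2 \<le> k0 / 32 * d0\<^sup>2" by (intro mult_right_mono) auto
  moreover have "eta\<^sup>2 = e\<^sup>2 * d0\<^sup>2" unfolding eta_def e_def by (simp only: power_mult_distrib mult.commute)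
  ultimately show ?thesis by (simp add: mult.assoc)
qed

lemma caseA:
  assumes "n \<ge> 2" "\<bar>\<alpha>\<bar> * real n \<le> eta" "\<bar>\<beta>\<bar> \<le> d0 / 2"
  shows "k0 / 360 * (real n ^ 3 * \<alpha>\<^sup>2 + real n * \<beta>\<^sup>2) \<le> (\<Sum>a=1..n. \<psi> (\<alpha> * real a + \<beta>))"
proof -
  have each: "k0 * (\<alpha> * real a + \<beta>)\<^sup>2 \<le> \<psi> (\<alpha> * real a + \<beta>)" if "a \<in> {1..n}" for a
  proof (rule low)
    have "\<bar>\<alpha> * real a\<bar> \<le> \<bar>\<alpha>\<bar> * real n" using that by (simp add: abs_mult mult_left_mono)
    then show "\<bar>\<alpha> * real a + \<beta>\<bar> \<le> d0" using assms eta_le by linarith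
  qed
  have "k0 / 360 * (real n ^ 3 * \<alpha>\<^sup>2 + real n * \<beta>\<^sup>2) \<le> k0 * (\<Sum>a=1..n. (\<alpha> * real a + \<beta>)\<^sup>2)"
    using quad_lower[OF assms(1), of \<alpha> \<beta>] k0 by (simp add: mult_left_mono)
  also have "\<dots> = (\<Sum>a=1..n. k0 * (\<alpha> * real a + \<beta>)\<^sup>2)" by (simp add: sum_distrib_left)
  also have "\<dots> \<le> (\<Sum>a=1..n. \<psi> (\<alpha> * real a + \<beta>))" by (intro sum_mono each)
  finally show ?thesis .
qed

lemma floor_half: fixes x :: real assumes "x \<ge> 1" shows "real (nat \<lfloor>x\<rfloor>) \<ge> x / 2" "nat \<lfloor>x\<rfloor> \<ge> 1"
proof -
  have "real_of_int \<lfloor>x\<rfloor> > x - 1" by linarith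
  moreover have "\<lfloor>x\<rfloor> \<ge> 1" using assms by linarith
  moreover have "real (nat \<lfloor>x\<rfloor>) = real_of_int \<lfloor>x\<rfloor>" using \<open>\<lfloor>x\<rfloor> \<ge> 1\<close> by simp
  ultimately show "real (nat \<lfloor>x\<rfloor>) \<ge> x / 2" by linarith
  show "nat \<lfloor>x\<rfloor> \<ge> 1" using assms by linarith
qed

lemma caseB:
  assumes "n \<ge> 2" "\<bar>\<alpha>\<bar> * real n > eta" "\<bar>\<alpha>\<bar> \<le> d0"
  shows "k0 * eta\<^sup>2 / 72 * real n \<le> (\<Sum>a=1..n. \<psi> (\<alpha> * real a + \<beta>))"
proof -
  have a0: "\<bar>\<alpha>\<bar> > 0" using assms eta_pos by (metis abs_ge_zero le_less_trans mult_eq_0_iff order_less_le)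
  define m where "m = nat \<lfloor>d0 / \<bar>\<alpha>\<bar>\<rfloor>"
  have dm: "d0 / \<bar>\<alpha>\<bar> \<ge> 1" using a0 assms(3) by simp
  have m1: "m \<ge> 1" and m2: "real m \<ge> d0 / \<bar>\<alpha>\<bar> / 2" using floor_half[OF dm] by (auto simp: m_def)
  have m3: "real m \<le> d0 / \<bar>\<alpha>\<bar>" unfolding m_def using dm by linarith
  define b where "b = min (n div 2) m"
  have "b \<le> n" by (simp add: b_def)
  have "n - b \<ge> n - n div 2" by (simp add: b_def)
  then have nb: "real (n - b) \<ge> real n / 2" by linarith
  have "\<bar>\<alpha>\<bar> * real b \<le> \<bar>\<alpha>\<bar> * real m" by (intro mult_left_mono) (auto simp: b_def)
  also have "\<dots> \<le> d0" using m3 a0 by (simp add: field_simps)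
  finally have bd: "\<bar>\<alpha> * real b\<bar> \<le> d0" by (simp add: abs_mult)
  have bl: "\<bar>\<alpha> * real b\<bar> \<ge> eta / 3"
  proof (cases "n div 2 \<le> m")
    case True
    then have "b = n div 2" by (simp add: b_def)
    have "n \<le> 3 * b" using assms(1) unfolding \<open>b = n div 2\<close> by presburger
    then have "real n \<le> 3 * real b" by (metis of_nat_le_iff of_nat_mult of_nat_numeral)
    then have "\<bar>\<alpha>\<bar> * real n \<le> \<bar>\<alpha>\<bar> * (3 * real b)" by (intro mult_left_mono) auto
    then show ?thesis using assms(2) by (simp add: abs_mult)
  next
    case False
    then have "b = m" by (simp add: b_def)
    have "\<bar>\<alpha>\<bar> * (d0 / \<bar>\<alpha>\<bar> / 2) \<le> \<bar>\<alpha>\<bar> * real m" using m2 by (intro mult_left_mono) auto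
    then have "d0 / 2 \<le> \<bar>\<alpha> * real b\<bar>" using a0 \<open>b = m\<close> by (simp add: abs_mult)
    then show ?thesis using eta_le eta_pos by linarith
  qed
  have "(eta / 3)\<^sup>2 \<le> \<bar>\<alpha> * real b\<bar>\<^sup>2" using bl eta_pos by (intro power_mono) auto
  then have "k0 * (eta / 3)\<^sup>2 \<le> k0 * (\<alpha> * real b)\<^sup>2" using k0 by (simp add: mult_left_mono)
  also have "\<dots> \<le> \<psi> (\<alpha> * real b)" using bd by (rule low)
  finally have psb: "k0 * eta\<^sup>2 / 9 \<le> \<psi> (\<alpha> * real b)" by (simp add: power_divide)
  have "real n / 2 * (k0 * eta\<^sup>2 / 9) \<le> real (n - b) * \<psi> (\<alpha> * real b)"
    using nb psb k0 by (intro mult_mono) auto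
  also have "\<dots> \<le> 4 * (\<Sum>a=1..n. \<psi> (\<alpha> * real a + \<beta>))"
    by (rule pair_bound[OF nonneg tri \<open>b \<le> n\<close>])
  finally have fin: "real n / 2 * (k0 * eta\<^sup>2 / 9) \<le> 4 * (\<Sum>a=1..n. \<psi> (\<alpha> * real a + \<beta>))" .
  have "k0 * eta\<^sup>2 / 72 * real n = (real n / 2 * (k0 * eta\<^sup>2 / 9)) / 4" by simp
  then show ?thesis using fin by linarith
qed

lemma caseC:
  assumes "\<bar>\<alpha>\<bar> * real n \<le> eta" "\<bar>\<beta>\<bar> > d0 / 2" "\<bar>\<beta>\<bar> \<le> d0"
  shows "k0 * d0\<^sup>2 / 16 * real n \<le> (\<Sum>a=1..n. \<psi> (\<alpha> * real a + \<beta>))"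
proof -
  have "(d0 / 2)\<^sup>2 \<le> \<bar>\<beta>\<bar>\<^sup>2" using assms d0 by (intro power_mono) auto
  then have "k0 * (d0/2)\<^sup>2 \<le> k0 * \<beta>\<^sup>2" using k0 by (simp add: mult_left_mono)
  also have "\<dots> \<le> \<psi> \<beta>" using assms by (intro low) auto
  finally have pb: "k0 * d0\<^sup>2 / 4 \<le> \<psi> \<beta>" by (simp add: power_divide)
  have each: "k0 * d0\<^sup>2 / 16 \<le> \<psi> (\<alpha> * real a + \<beta>)" if "a \<in> {1..n}" for a
  proof -
    have "\<bar>\<alpha> * real a\<bar> \<le> \<bar>\<alpha>\<bar> * real n" using that by (simp add: abs_mult mult_left_mono)
    then have "\<bar>\<alpha> * real a\<bar> \<le> eta" using assms by linarith
    then have "\<bar>\<alpha> * real a\<bar>\<^sup>2 \<le> eta\<^sup>2" by (intro power_mono) auto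
    then have "B * (\<alpha> * real a)\<^sup>2 \<le> B * eta\<^sup>2" using B by (simp add: mult_left_mono)
    then have u: "\<psi> (\<alpha> * real a) \<le> k0 * d0\<^sup>2 / 32" using up[of "\<alpha> * real a"] eta_sq by linarith
    have "\<psi> \<beta> \<le> 2 * \<psi> (\<alpha> * real a + \<beta>) + 2 * \<psi> (\<alpha> * real a)"
      using tri[of "\<alpha> * real a + \<beta>" "\<alpha> * real a"] by simp
    moreover have "0 \<le> k0 * d0\<^sup>2" using k0 by simp
    ultimately show ?thesis using pb u by linarith
  qed
  have "k0 * d0\<^sup>2 / 16 * real n = (\<Sum>a=1..n. k0 * d0\<^sup>2 / 16)" by simp
  also have "\<dots> \<le> (\<Sum>a=1..n. \<psi> (\<alpha> * real a + \<beta>))" by (intro sum_mono each)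
  finally show ?thesis .
qed

definition "kap = k0 * eta\<^sup>2 / 72"

lemma kap_pos: "kap > 0" using k0 eta_pos by (simp add: kap_def)

lemma comb_lower:
  assumes "n \<ge> 2" "\<bar>\<alpha>\<bar> \<le> d0" "\<bar>\<beta>\<bar> \<le> d0"
  shows "min (k0 / 360 * (real n ^ 3 * \<alpha>\<^sup>2 + real n * \<beta>\<^sup>2)) (kap * real n) \<le> (\<Sum>a=1..n. \<psi> (\<alpha> * real a + \<beta>))"
proof -
  have kd: "kap \<le> k0 * d0\<^sup>2 / 16"
  proof -
    have "eta\<^sup>2 \<le> (d0/2)\<^sup>2" using eta_le eta_pos by (intro power_mono) auto
    then have "k0 * eta\<^sup>2 \<le> k0 * (d0/2)\<^sup>2" using k0 by (simp add: mult_left_mono)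
    moreover have "k0 * (d0/2)\<^sup>2 = k0 * d0\<^sup>2 / 4" by (simp add: power_divide)
    moreover have "0 \<le> k0 * d0\<^sup>2" using k0 by simp
    ultimately show ?thesis unfolding kap_def by linarith
  qed
  show ?thesis
  proof (cases "\<bar>\<alpha>\<bar> * real n \<le> eta")
    case True
    show ?thesis
    proof (cases "\<bar>\<beta>\<bar> \<le> d0 / 2")
      case True
      with caseA[OF assms(1) \<open>\<bar>\<alpha>\<bar> * real n \<le> eta\<close>] show ?thesis by (simp add: min.coboundedI1)
    next
      case False
      then have "k0 * d0\<^sup>2 / 16 * real n \<le> (\<Sum>a=1..n. \<psi> (\<alpha> * real a + \<beta>))"
        using caseC \<open>\<bar>\<alpha>\<bar> * real n \<le> eta\<close> assms by auto
      moreover have "kap * real n \<le> k0 * d0\<^sup>2 / 16 * real n" using kd by (intro mult_right_mono) auto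
      ultimately show ?thesis by (simp add: min.coboundedI2)
    qed
  next
    case False
    then have "kap * real n \<le> (\<Sum>a=1..n. \<psi> (\<alpha> * real a + \<beta>))"
      using caseB assms unfolding kap_def by auto
    then show ?thesis by (simp add: min.coboundedI2)
  qed
qed

end




locale iid = prob_space M for M :: "'a measure" +
  fixes X :: "nat \<Rightarrow> 'a \<Rightarrow> real"
  assumes rv[measurable]: "\<And>i. X i \<in> borel_measurable M"
    and indep: "indep_vars (\<lambda>_. borel) X UNIV"
    and ident: "\<And>i. distr M borel (X i) = distr M borel (X 0)"
    and int1: "integrable M (X 0)" and mean0: "integral\<^sup>L M (X 0) = 0"
    and int2: "integrable M (\<lambda>\<omega>. (X 0 \<omega>)\<^sup>2)" and var1: "integral\<^sup>L M (\<lambda>\<omega>. (X 0 \<omega>)\<^sup>2) = 1"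
begin

lemma ident_integral:
  fixes f :: "real \<Rightarrow> 'b::{banach, second_countable_topology}"
  assumes [measurable]: "f \<in> borel_measurable borel"
  shows "integral\<^sup>L M (\<lambda>\<omega>. f (X i \<omega>)) = integral\<^sup>L M (\<lambda>\<omega>. f (X 0 \<omega>))"
proof -
  have "integral\<^sup>L M (\<lambda>\<omega>. f (X i \<omega>)) = integral\<^sup>L (distr M borel (X i)) f"
    by (rule integral_distr[symmetric]) auto
  also have "\<dots> = integral\<^sup>L (distr M borel (X 0)) f" by (simp add: ident[of i])
  also have "\<dots> = integral\<^sup>L M (\<lambda>\<omega>. f (X 0 \<omega>))" by (rule integral_distr) auto
  finally show ?thesis .
qed

lemma ident_integrable:
  fixes f :: "real \<Rightarrow> 'b::{banach, second_countable_topology}"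
  assumes [measurable]: "f \<in> borel_measurable borel"
  shows "integrable M (\<lambda>\<omega>. f (X i \<omega>)) \<longleftrightarrow> integrable M (\<lambda>\<omega>. f (X 0 \<omega>))"
proof -
  have "integrable M (\<lambda>\<omega>. f (X i \<omega>)) \<longleftrightarrow> integrable (distr M borel (X i)) f"
    by (rule integrable_distr_eq[symmetric]) auto
  also have "\<dots> \<longleftrightarrow> integrable (distr M borel (X 0)) f" by (simp add: ident[of i])
  also have "\<dots> \<longleftrightarrow> integrable M (\<lambda>\<omega>. f (X 0 \<omega>))" by (rule integrable_distr_eq) auto
  finally show ?thesis .
qed

definition phi :: "real \<Rightarrow> complex" where
  "phi c = (CLINT \<omega>|M. iexp (c * X 0 \<omega>))"

lemma phi_i: "(CLINT \<omega>|M. iexp (c * X i \<omega>)) = phi c"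
  unfolding phi_def by (rule ident_integral[where f = "\<lambda>x. iexp (c * x)"]) measurable

lemma integrable_iexp': "integrable M (\<lambda>\<omega>. iexp (f \<omega>))" if [measurable]: "f \<in> borel_measurable M"
  by (rule integrable_iexp) auto

lemma char_prod:
  fixes c :: "nat \<Rightarrow> real" and d :: real
  shows "(LINT \<omega>|M. cos (d + (\<Sum>i<n. c i * X i \<omega>))) \<le> (\<Prod>i<n. cmod (phi (c i)))"
proof -
  have ind: "indep_vars (\<lambda>_. borel) (\<lambda>i \<omega>. iexp (c i * X i \<omega>)) {..<n}"
    by (rule indep_vars_compose2[OF indep_vars_subset[OF indep]]) auto
  have prodint: "(CLINT \<omega>|M. (\<Prod>i<n. iexp (c i * X i \<omega>))) = (\<Prod>i<n. phi (c i))"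
  proof -
    have "(CLINT \<omega>|M. (\<Prod>i<n. iexp (c i * X i \<omega>))) = (\<Prod>i<n. CLINT \<omega>|M. iexp (c i * X i \<omega>))"
      apply (rule indep_vars_lebesgue_integral[OF _ ind])
       apply simp
      apply (rule integrable_iexp')
      apply measurable
      done
    then show ?thesis by (simp only: phi_i)
  qed
  have intp: "integrable M (\<lambda>\<omega>. iexp d * (\<Prod>i<n. iexp (c i * X i \<omega>)))"
    apply (intro integrable_mult_right indep_vars_integrable[OF _ ind])
     apply simp
    apply (rule integrable_iexp')
    apply measurable
    done
  have pt: "cos (d + (\<Sum>i<n. c i * X i \<omega>)) = Re (iexp d * (\<Prod>i<n. iexp (c i * X i \<omega>)))" for \<omega>
  proof -
    have "(\<Prod>i<n. iexp (c i * X i \<omega>)) = exp (\<Sum>i<n. \<i> * complex_of_real (c i * X i \<omega>))"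
      by (simp add: exp_sum)
    also have "(\<Sum>i<n. \<i> * complex_of_real (c i * X i \<omega>)) = \<i> * complex_of_real (\<Sum>i<n. c i * X i \<omega>)"
      by (simp add: sum_distrib_left)
    finally have "iexp d * (\<Prod>i<n. iexp (c i * X i \<omega>)) = iexp (d + (\<Sum>i<n. c i * X i \<omega>))"
      by (simp add: exp_add[symmetric] distrib_left)
    then show ?thesis by (simp add: Re_exp)
  qed
  have "(LINT \<omega>|M. cos (d + (\<Sum>i<n. c i * X i \<omega>))) = (LINT \<omega>|M. Re (iexp d * (\<Prod>i<n. iexp (c i * X i \<omega>))))"
    by (simp add: pt)
  also have "\<dots> = Re (CLINT \<omega>|M. iexp d * (\<Prod>i<n. iexp (c i * X i \<omega>)))"
    by (rule integral_Re[OF intp])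
  also have "\<dots> = Re (iexp d * (\<Prod>i<n. phi (c i)))"
    by (simp only: integral_mult_right_zero prodint)
  also have "\<dots> \<le> cmod (iexp d * (\<Prod>i<n. phi (c i)))" by (rule complex_Re_le_cmod)
  also have "\<dots> = (\<Prod>i<n. cmod (phi (c i)))" by (simp add: norm_mult prod_norm)
  finally show ?thesis .
qed

end




lemma cnj_iexp: "cnj (iexp t) = iexp (- t)"
  by (simp add: complex_eq_iff Re_exp Im_exp)

context iid begin

lemma integrable_bdd:
  fixes f :: "'a \<Rightarrow> real"
  assumes "f \<in> borel_measurable M" "\<And>\<omega>. \<bar>f \<omega>\<bar> \<le> K"
  shows "integrable M f"
  using assms by (intro integrable_const_bound[where B = K]) auto

definition psi :: "real \<Rightarrow> real" where
  "psi c = (LINT \<omega>|M. 1 - cos (c * (X 0 \<omega> - X 1 \<omega>)))"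

lemma int_cosY: "integrable M (\<lambda>\<omega>. cos (c * (X 0 \<omega> - X 1 \<omega>)))"
  by (rule integrable_bdd[where K = 1]) auto

lemma int_1cosY: "integrable M (\<lambda>\<omega>. 1 - cos (c * (X 0 \<omega> - X 1 \<omega>)))"
  using int_cosY[of c] by (intro Bochner_Integration.integrable_diff) (auto simp: prob_space)

lemma psi_alt: "psi c = 1 - (LINT \<omega>|M. cos (c * (X 0 \<omega> - X 1 \<omega>)))"
  unfolding psi_def using int_cosY[of c] by (simp add: Bochner_Integration.integral_diff prob_space)

lemma phi_sq: "(cmod (phi c))\<^sup>2 = 1 - psi c"
proof -
  have cp: "cnj (phi c) = (CLINT \<omega>|M. iexp ((- c) * X 1 \<omega>))"
  proof -
    have "cnj (phi c) = (CLINT \<omega>|M. cnj (iexp (c * X 0 \<omega>)))" unfolding phi_def by simp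
    also have "\<dots> = (CLINT \<omega>|M. iexp ((- c) * X 0 \<omega>))" by (simp only: cnj_iexp) simp
    also have "\<dots> = phi (- c)" unfolding phi_def ..
    also have "\<dots> = (CLINT \<omega>|M. iexp ((- c) * X 1 \<omega>))" by (rule phi_i[symmetric])
    finally show ?thesis .
  qed
  define f where "f i \<omega> = iexp ((if i = (0::nat) then c else - c) * X i \<omega>)" for i \<omega>
  have ind: "indep_vars (\<lambda>_. borel) f {0, 1}"
    unfolding f_def by (rule indep_vars_compose2[OF indep_vars_subset[OF indep]]) auto
  have intf: "integrable M (f i)" for i
    unfolding f_def by (rule integrable_iexp') measurable
  have "(CLINT \<omega>|M. (\<Prod>i\<in>{0,1}. f i \<omega>)) = (\<Prod>i\<in>{0,1}. CLINT \<omega>|M. f i \<omega>)"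
    by (rule indep_vars_lebesgue_integral[OF _ ind]) (auto intro: intf)
  then have "(CLINT \<omega>|M. f 0 \<omega> * f 1 \<omega>) = (CLINT \<omega>|M. f 0 \<omega>) * (CLINT \<omega>|M. f 1 \<omega>)" by simp
  moreover have "(CLINT \<omega>|M. f 0 \<omega>) = phi c" unfolding f_def phi_def by simp
  moreover have "(CLINT \<omega>|M. f 1 \<omega>) = cnj (phi c)" unfolding f_def cp by simp
  moreover have "f 0 \<omega> * f 1 \<omega> = iexp (c * (X 0 \<omega> - X 1 \<omega>))" for \<omega>
    unfolding f_def by (simp add: exp_add[symmetric] algebra_simps)
  ultimately have pc: "phi c * cnj (phi c) = (CLINT \<omega>|M. iexp (c * (X 0 \<omega> - X 1 \<omega>)))" by simp
  have "(cmod (phi c))\<^sup>2 = Re (complex_of_real ((cmod (phi c))\<^sup>2))" by simp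
  also have "\<dots> = Re (CLINT \<omega>|M. iexp (c * (X 0 \<omega> - X 1 \<omega>)))"
    by (simp only: complex_norm_square pc)
  also have "\<dots> = (LINT \<omega>|M. Re (iexp (c * (X 0 \<omega> - X 1 \<omega>))))"
    by (rule integral_Re[symmetric]) (rule integrable_iexp', measurable)
  also have "\<dots> = (LINT \<omega>|M. cos (c * (X 0 \<omega> - X 1 \<omega>)))"
    by (simp add: Re_exp)
  finally show ?thesis by (simp add: psi_alt)
qed

lemma psi_nonneg: "psi c \<ge> 0"
  unfolding psi_def by (intro Bochner_Integration.integral_nonneg) simp

lemma cmod_phi_le: "cmod (phi c) \<le> exp (- psi c / 2)"
proof -
  have "(cmod (phi c))\<^sup>2 \<le> exp (- psi c)"
    unfolding phi_sq using exp_ge_add_one_self[of "- psi c"] by simp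
  also have "exp (- psi c) = (exp (- psi c / 2))\<^sup>2"
    by (simp add: power2_eq_square exp_add[symmetric])
  finally show ?thesis by (rule power2_le_imp_le) simp
qed

lemma psi_tri: "psi (u - v) \<le> 2 * psi u + 2 * psi v"
proof -
  have "psi (u - v) \<le> (LINT \<omega>|M. 2 * (1 - cos (u * (X 0 \<omega> - X 1 \<omega>))) + 2 * (1 - cos (v * (X 0 \<omega> - X 1 \<omega>))))"
    unfolding psi_def
  proof (rule integral_mono)
    show "integrable M (\<lambda>\<omega>. 1 - cos ((u - v) * (X 0 \<omega> - X 1 \<omega>)))" by (rule int_1cosY)
    show "integrable M (\<lambda>\<omega>. 2 * (1 - cos (u * (X 0 \<omega> - X 1 \<omega>))) + 2 * (1 - cos (v * (X 0 \<omega> - X 1 \<omega>))))"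
      by (rule Bochner_Integration.integrable_add; rule integrable_mult_right; rule int_1cosY)
    fix \<omega>
    have "(u - v) * (X 0 \<omega> - X 1 \<omega>) = u * (X 0 \<omega> - X 1 \<omega>) - v * (X 0 \<omega> - X 1 \<omega>)" by (simp add: algebra_simps)
    then show "1 - cos ((u - v) * (X 0 \<omega> - X 1 \<omega>)) \<le> 2 * (1 - cos (u * (X 0 \<omega> - X 1 \<omega>))) + 2 * (1 - cos (v * (X 0 \<omega> - X 1 \<omega>)))"
      using one_minus_cos_tri by metis
  qed
  also have "\<dots> = (LINT \<omega>|M. 2 * (1 - cos (u * (X 0 \<omega> - X 1 \<omega>)))) + (LINT \<omega>|M. 2 * (1 - cos (v * (X 0 \<omega> - X 1 \<omega>))))"
    by (rule Bochner_Integration.integral_add; rule integrable_mult_right; rule int_1cosY)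
  also have "\<dots> = 2 * psi u + 2 * psi v"
    unfolding psi_def by (simp only: integral_mult_right_zero)
  finally show ?thesis .
qed

lemma int_X1sq: "integrable M (\<lambda>\<omega>. (X i \<omega>)\<^sup>2)"
  using ident_integrable[of "\<lambda>x. x\<^sup>2" i] int2 by simp

lemma int_X1sq_eq: "(LINT \<omega>|M. (X i \<omega>)\<^sup>2) = 1"
  using ident_integral[of "\<lambda>x. x\<^sup>2" i] var1 by simp

lemma int_X: "integrable M (X i)"
  using ident_integrable[of "\<lambda>x. x" i] int1 by simp

lemma int_X_eq: "(LINT \<omega>|M. X i \<omega>) = 0"
  using ident_integral[of "\<lambda>x. x" i] mean0 by simp

lemma psi_up: "psi u \<le> 2 * u\<^sup>2"
proof -
  have "psi u \<le> (LINT \<omega>|M. u\<^sup>2 * ((X 0 \<omega>)\<^sup>2 + (X 1 \<omega>)\<^sup>2))"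
    unfolding psi_def
  proof (rule integral_mono')
    show "integrable M (\<lambda>\<omega>. u\<^sup>2 * ((X 0 \<omega>)\<^sup>2 + (X 1 \<omega>)\<^sup>2))"
      by (rule integrable_mult_right, rule Bochner_Integration.integrable_add, rule int_X1sq, rule int_X1sq)
    fix \<omega>
    have "1 - cos (u * (X 0 \<omega> - X 1 \<omega>)) \<le> (u * (X 0 \<omega> - X 1 \<omega>))\<^sup>2 / 2" by (rule one_minus_cos_le)
    also have "\<dots> = u\<^sup>2 * ((X 0 \<omega> - X 1 \<omega>)\<^sup>2 / 2)" by (simp add: power_mult_distrib)
    also have "\<dots> \<le> u\<^sup>2 * ((X 0 \<omega>)\<^sup>2 + (X 1 \<omega>)\<^sup>2)"
      using sq_sum_le[of "X 0 \<omega>" "- X 1 \<omega>"] by (intro mult_left_mono) auto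
    finally show "1 - cos (u * (X 0 \<omega> - X 1 \<omega>)) \<le> u\<^sup>2 * ((X 0 \<omega>)\<^sup>2 + (X 1 \<omega>)\<^sup>2)" .
    show "0 \<le> u\<^sup>2 * ((X 0 \<omega>)\<^sup>2 + (X 1 \<omega>)\<^sup>2)" by simp
  qed
  also have "\<dots> = 2 * u\<^sup>2"
    using int_X1sq[of 0] int_X1sq[of 1] by (simp add: Bochner_Integration.integral_add int_X1sq_eq)
  finally show ?thesis .
qed

end




context iid begin

lemma int_X0X1: "integrable M (\<lambda>\<omega>. X 0 \<omega> * X 1 \<omega>)" and EX0X1: "(LINT \<omega>|M. X 0 \<omega> * X 1 \<omega>) = 0"
proof -
  have ind: "indep_vars (\<lambda>_. borel) X {0, 1}" by (rule indep_vars_subset[OF indep]) auto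
  have "integrable M (\<lambda>\<omega>. \<Prod>i\<in>{0,1}. X i \<omega>)"
    by (rule indep_vars_integrable[OF _ ind]) (auto intro: int_X)
  then show "integrable M (\<lambda>\<omega>. X 0 \<omega> * X 1 \<omega>)" by simp
  have "(LINT \<omega>|M. (\<Prod>i\<in>{0,1}. X i \<omega>)) = (\<Prod>i\<in>{0,1}. (LINT \<omega>|M. X i \<omega>))"
    by (rule indep_vars_lebesgue_integral[OF _ ind]) (auto intro: int_X)
  then show "(LINT \<omega>|M. X 0 \<omega> * X 1 \<omega>) = 0" by (simp add: int_X_eq)
qed

lemma int_Y2: "integrable M (\<lambda>\<omega>. (X 0 \<omega> - X 1 \<omega>)\<^sup>2)" and EY2: "(LINT \<omega>|M. (X 0 \<omega> - X 1 \<omega>)\<^sup>2) = 2"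
proof -
  have e: "(X 0 \<omega> - X 1 \<omega>)\<^sup>2 = ((X 0 \<omega>)\<^sup>2 + (X 1 \<omega>)\<^sup>2) - 2 * (X 0 \<omega> * X 1 \<omega>)" for \<omega>
    by (simp add: power2_eq_square algebra_simps)
  have i1: "integrable M (\<lambda>\<omega>. (X 0 \<omega>)\<^sup>2 + (X 1 \<omega>)\<^sup>2)"
    by (rule Bochner_Integration.integrable_add; rule int_X1sq)
  have i2: "integrable M (\<lambda>\<omega>. 2 * (X 0 \<omega> * X 1 \<omega>))"
    by (rule integrable_mult_right, rule int_X0X1)
  show "integrable M (\<lambda>\<omega>. (X 0 \<omega> - X 1 \<omega>)\<^sup>2)"
    unfolding e by (rule Bochner_Integration.integrable_diff[OF i1 i2])
  have "(LINT \<omega>|M. (X 0 \<omega> - X 1 \<omega>)\<^sup>2) = (LINT \<omega>|M. (X 0 \<omega>)\<^sup>2 + (X 1 \<omega>)\<^sup>2) - (LINT \<omega>|M. 2 * (X 0 \<omega> * X 1 \<omega>))"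
    unfolding e by (rule Bochner_Integration.integral_diff[OF i1 i2])
  also have "(LINT \<omega>|M. (X 0 \<omega>)\<^sup>2 + (X 1 \<omega>)\<^sup>2) = (LINT \<omega>|M. (X 0 \<omega>)\<^sup>2) + (LINT \<omega>|M. (X 1 \<omega>)\<^sup>2)"
    by (rule Bochner_Integration.integral_add; rule int_X1sq)
  also have "(LINT \<omega>|M. 2 * (X 0 \<omega> * X 1 \<omega>)) = 2 * (LINT \<omega>|M. X 0 \<omega> * X 1 \<omega>)"
    by (rule integral_mult_right_zero)
  finally show "(LINT \<omega>|M. (X 0 \<omega> - X 1 \<omega>)\<^sup>2) = 2" by (simp only: int_X1sq_eq EX0X1)
qed

definition trunc :: "nat \<Rightarrow> 'a \<Rightarrow> real" where
  "trunc k \<omega> = (if \<bar>X 0 \<omega> - X 1 \<omega>\<bar> \<le> real k then (X 0 \<omega> - X 1 \<omega>)\<^sup>2 else 0)"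

lemma trunc_meas[measurable]: "trunc k \<in> borel_measurable M"
  unfolding trunc_def by measurable

lemma trunc_bdd: "\<bar>trunc k \<omega>\<bar> \<le> (real k)\<^sup>2"
proof (cases "\<bar>X 0 \<omega> - X 1 \<omega>\<bar> \<le> real k")
  case True
  then have "\<bar>X 0 \<omega> - X 1 \<omega>\<bar>\<^sup>2 \<le> (real k)\<^sup>2" by (intro power_mono) auto
  then show ?thesis using True by (simp add: trunc_def)
qed (simp add: trunc_def)

lemma trunc_int: "integrable M (trunc k)"
  by (rule integrable_bdd[OF trunc_meas trunc_bdd])

lemma trunc_big: "\<exists>k. (LINT \<omega>|M. trunc k \<omega>) > 1"
proof -
  have "(\<lambda>k. LINT \<omega>|M. trunc k \<omega>) \<longlonglongrightarrow> (LINT \<omega>|M. (X 0 \<omega> - X 1 \<omega>)\<^sup>2)"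
  proof (rule integral_dominated_convergence[where w = "\<lambda>\<omega>. (X 0 \<omega> - X 1 \<omega>)\<^sup>2"])
    show "(\<lambda>\<omega>. (X 0 \<omega> - X 1 \<omega>)\<^sup>2) \<in> borel_measurable M" by measurable
    show "\<And>i. trunc i \<in> borel_measurable M" by measurable
    show "integrable M (\<lambda>\<omega>. (X 0 \<omega> - X 1 \<omega>)\<^sup>2)" by (rule int_Y2)
    show "AE \<omega> in M. (\<lambda>i. trunc i \<omega>) \<longlonglongrightarrow> (X 0 \<omega> - X 1 \<omega>)\<^sup>2"
    proof (rule AE_I2)
      fix \<omega>
      obtain N :: nat where N: "\<bar>X 0 \<omega> - X 1 \<omega>\<bar> \<le> real N" using real_arch_simple by blast
      have "eventually (\<lambda>k. trunc k \<omega> = (X 0 \<omega> - X 1 \<omega>)\<^sup>2) sequentially"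
        unfolding eventually_sequentially
      proof (intro exI allI impI)
        fix k assume "N \<le> k"
        then have "real N \<le> real k" by simp
        then show "trunc k \<omega> = (X 0 \<omega> - X 1 \<omega>)\<^sup>2" using N by (simp add: trunc_def)
      qed
      then show "(\<lambda>i. trunc i \<omega>) \<longlonglongrightarrow> (X 0 \<omega> - X 1 \<omega>)\<^sup>2" by (rule tendsto_eventually)
    qed
    show "\<And>i. AE \<omega> in M. norm (trunc i \<omega>) \<le> (X 0 \<omega> - X 1 \<omega>)\<^sup>2"
      by (rule AE_I2) (simp add: trunc_def)
  qed
  then have "(\<lambda>k. LINT \<omega>|M. trunc k \<omega>) \<longlonglongrightarrow> 2" by (simp only: EY2)
  then have "eventually (\<lambda>k. 1 < (LINT \<omega>|M. trunc k \<omega>)) sequentially"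
    by (rule order_tendstoD(1)) simp
  then show ?thesis by (auto simp: eventually_sequentially)
qed

lemma psi_low: "\<exists>d0>0. d0 \<le> 1 \<and> (\<forall>u. \<bar>u\<bar> \<le> d0 \<longrightarrow> 1/5 * u\<^sup>2 \<le> psi u)"
proof -
  obtain k where k: "(LINT \<omega>|M. trunc k \<omega>) > 1" using trunc_big by blast
  define d0 where "d0 = 1 / (real k + 1)"
  have d0: "d0 > 0" "d0 \<le> 1" by (auto simp: d0_def)
  have "1/5 * u\<^sup>2 \<le> psi u" if u: "\<bar>u\<bar> \<le> d0" for u
  proof -
    have "1/5 * u\<^sup>2 \<le> 1/5 * u\<^sup>2 * (LINT \<omega>|M. trunc k \<omega>)"
      using k by (simp add: mult_le_cancel_left1)
    also have "\<dots> = (LINT \<omega>|M. 1/5 * u\<^sup>2 * trunc k \<omega>)" by simp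
    also have "\<dots> \<le> psi u"
      unfolding psi_def
    proof (rule integral_mono)
      show "integrable M (\<lambda>\<omega>. 1/5 * u\<^sup>2 * trunc k \<omega>)" by (rule integrable_mult_right, rule trunc_int)
      show "integrable M (\<lambda>\<omega>. 1 - cos (u * (X 0 \<omega> - X 1 \<omega>)))" by (rule int_1cosY)
      fix \<omega>
      show "1/5 * u\<^sup>2 * trunc k \<omega> \<le> 1 - cos (u * (X 0 \<omega> - X 1 \<omega>))"
      proof (cases "\<bar>X 0 \<omega> - X 1 \<omega>\<bar> \<le> real k")
        case True
        have "\<bar>u * (X 0 \<omega> - X 1 \<omega>)\<bar> \<le> d0 * real k"
          unfolding abs_mult using u True by (intro mult_mono) auto
        also have "\<dots> \<le> 1" by (simp add: d0_def field_simps)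
        finally have "(u * (X 0 \<omega> - X 1 \<omega>))\<^sup>2 / 5 \<le> 1 - cos (u * (X 0 \<omega> - X 1 \<omega>))"
          by (rule one_minus_cos_ge)
        then show ?thesis using True by (simp add: trunc_def power_mult_distrib)
      qed (simp add: trunc_def)
    qed
    finally show ?thesis .
  qed
  with d0 show ?thesis by blast
qed

end




lemma second_partial_sum_eq:
  "second_partial_sum X n \<omega> = (\<Sum>i<n. real (n - i) * X i \<omega>)"
proof (induction n)
  case 0
  then show ?case by (simp add: second_partial_sum_def)
next
  case (Suc n)
  have "second_partial_sum X (Suc n) \<omega> = second_partial_sum X n \<omega> + partial_sum X (Suc n) \<omega>"
    by (simp add: second_partial_sum_def)
  also have "\<dots> = (\<Sum>i<n. real (n - i) * X i \<omega>) + (\<Sum>i<Suc n. X i \<omega>)"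
    by (simp add: Suc partial_sum_def)
  also have "\<dots> = (\<Sum>i<n. real (n - i) * X i \<omega> + X i \<omega>) + X n \<omega>"
    by (simp add: sum.distrib)
  also have "(\<Sum>i<n. real (n - i) * X i \<omega> + X i \<omega>) = (\<Sum>i<n. real (Suc n - i) * X i \<omega>)"
    by (intro sum.cong) (auto simp: Suc_diff_le of_nat_Suc algebra_simps)
  finally show ?case by simp
qed

lemma sum_rev_shift: "(\<Sum>i<n. g (real (n - i))) = (\<Sum>a=1..n. g (real a))"
  by (rule sum.reindex_bij_witness[of _ "\<lambda>a. n - a" "\<lambda>i. n - i"]) auto

lemma exp_min: fixes A B :: real shows "exp (- min A B / 2) \<le> exp (- A / 2) + exp (- B / 2)"
proof (cases "A \<le> B")
  case True
  then show ?thesis using exp_gt_zero[of "- B / 2"] by (simp add: min_def)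
next
  case False
  then show ?thesis using exp_gt_zero[of "- A / 2"] by (simp add: min_def)
qed

context iid begin

lemma char_bound: "\<exists>c \<kappa> d0. c > 0 \<and> \<kappa> > 0 \<and> 0 < d0 \<and> d0 \<le> 1 \<and>
  (\<forall>n \<alpha> \<beta> d. n \<ge> 2 \<longrightarrow> \<bar>\<alpha>\<bar> \<le> d0 \<longrightarrow> \<bar>\<beta>\<bar> \<le> d0 \<longrightarrow>
    (LINT \<omega>|M. cos (d + \<alpha> * second_partial_sum X n \<omega> + \<beta> * partial_sum X n \<omega>))
      \<le> exp (- (c * (real n ^ 3 * \<alpha>\<^sup>2 + real n * \<beta>\<^sup>2)) / 2) + exp (- (\<kappa> * real n) / 2))"
proof -
  obtain d0 where d0: "d0 > 0" "d0 \<le> 1" and low: "\<And>u. \<bar>u\<bar> \<le> d0 \<Longrightarrow> 1/5 * u\<^sup>2 \<le> psi u"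
    using psi_low by blast
  interpret P: psi_fun psi "1/5" d0 2
  proof
    fix u :: real assume "\<bar>u\<bar> \<le> d0" then show "1/5 * u\<^sup>2 \<le> psi u" by (rule low)
  qed (auto intro: psi_nonneg psi_tri psi_up d0)
  have main: "(LINT \<omega>|M. cos (d + \<alpha> * second_partial_sum X n \<omega> + \<beta> * partial_sum X n \<omega>))
      \<le> exp (- (1/5/360 * (real n ^ 3 * \<alpha>\<^sup>2 + real n * \<beta>\<^sup>2)) / 2) + exp (- (P.kap * real n) / 2)"
    if n: "n \<ge> 2" and a: "\<bar>\<alpha>\<bar> \<le> d0" and b: "\<bar>\<beta>\<bar> \<le> d0" for n \<alpha> \<beta> d
  proof -
    define c where "c i = \<alpha> * real (n - i) + \<beta>" for i
    have eq: "d + \<alpha> * second_partial_sum X n \<omega> + \<beta> * partial_sum X n \<omega> = d + (\<Sum>i<n. c i * X i \<omega>)" for \<omega>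
    proof -
      have "\<alpha> * second_partial_sum X n \<omega> + \<beta> * partial_sum X n \<omega> = (\<Sum>i<n. \<alpha> * (real (n - i) * X i \<omega>) + \<beta> * X i \<omega>)"
        by (simp only: second_partial_sum_eq partial_sum_def sum_distrib_left sum.distrib)
      also have "\<dots> = (\<Sum>i<n. c i * X i \<omega>)" by (simp add: c_def distrib_right mult.assoc)
      finally show ?thesis by simp
    qed
    have "(LINT \<omega>|M. cos (d + \<alpha> * second_partial_sum X n \<omega> + \<beta> * partial_sum X n \<omega>))
        = (LINT \<omega>|M. cos (d + (\<Sum>i<n. c i * X i \<omega>)))" by (simp only: eq)
    also have "\<dots> \<le> (\<Prod>i<n. cmod (phi (c i)))" by (rule char_prod)
    also have "\<dots> \<le> (\<Prod>i<n. exp (- psi (c i) / 2))"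
      by (intro prod_mono conjI cmod_phi_le) auto
    also have "\<dots> = exp (- (\<Sum>i<n. psi (c i)) / 2)"
      by (simp add: exp_sum[symmetric] sum_negf sum_divide_distrib)
    also have "(\<Sum>i<n. psi (c i)) = (\<Sum>a=1..n. psi (\<alpha> * real a + \<beta>))"
      unfolding c_def by (rule sum_rev_shift[where g = "\<lambda>x. psi (\<alpha> * x + \<beta>)"])
    also have "exp (- (\<Sum>a=1..n. psi (\<alpha> * real a + \<beta>)) / 2)
        \<le> exp (- min (1/5/360 * (real n ^ 3 * \<alpha>\<^sup>2 + real n * \<beta>\<^sup>2)) (P.kap * real n) / 2)"
      using P.comb_lower[OF n a b] by simp
    also have "\<dots> \<le> exp (- (1/5/360 * (real n ^ 3 * \<alpha>\<^sup>2 + real n * \<beta>\<^sup>2)) / 2) + exp (- (P.kap * real n) / 2)"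
      by (rule exp_min)
    finally show ?thesis .
  qed
  show ?thesis
    apply (rule exI[of _ "1/5/360"], rule exI[of _ P.kap], rule exI[of _ d0])
    using P.kap_pos d0 main by auto
qed

end




definition fej :: "nat \<Rightarrow> real \<Rightarrow> real" where
  "fej N u = (\<Sum>k<N. \<Sum>l<N. cos ((real k - real l) * u))"

lemma fej_sq: "fej N u = (\<Sum>k<N. cos (real k * u))\<^sup>2 + (\<Sum>k<N. sin (real k * u))\<^sup>2"
proof -
  have "fej N u = (\<Sum>k<N. \<Sum>l<N. cos (real k * u) * cos (real l * u) + sin (real k * u) * sin (real l * u))"
    unfolding fej_def by (simp add: left_diff_distrib cos_diff)
  also have "\<dots> = (\<Sum>k<N. cos (real k * u)) * (\<Sum>l<N. cos (real l * u)) + (\<Sum>k<N. sin (real k * u)) * (\<Sum>l<N. sin (real l * u))"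
    by (simp add: sum_product sum.distrib)
  finally show ?thesis by (simp add: power2_eq_square)
qed

lemma fej_nonneg: "fej N u \<ge> 0"
  unfolding fej_sq by simp

lemma fej_bdd: "\<bar>fej N u\<bar> \<le> real N ^ 2"
proof -
  have "\<bar>fej N u\<bar> \<le> (\<Sum>k<N. \<Sum>l<N. \<bar>cos ((real k - real l) * u)\<bar>)"
    unfolding fej_def by (rule order_trans[OF sum_abs sum_mono]) (rule sum_abs)
  also have "\<dots> \<le> (\<Sum>k<N. \<Sum>l<N. 1)" by (intro sum_mono) simp
  finally show ?thesis by (simp add: power2_eq_square)
qed

lemma fej_lower:
  assumes "N \<ge> 1" "N = 1 \<or> \<bar>u\<bar> \<le> 1 / real N"
  shows "fej N u \<ge> real N ^ 2 / 2"
proof -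
  have each: "cos ((real k - real l) * u) \<ge> 1/2" if "k < N" "l < N" for k l
  proof (rule cos_ge_half)
    show "\<bar>(real k - real l) * u\<bar> \<le> 1"
    proof (cases "N = 1")
      case True then show ?thesis using that by simp
    next
      case False
      then have u: "\<bar>u\<bar> \<le> 1 / real N" using assms by auto
      have "\<bar>real k - real l\<bar> \<le> real N" using that by linarith
      then have "\<bar>real k - real l\<bar> * \<bar>u\<bar> \<le> real N * (1 / real N)"
        using u by (intro mult_mono) auto
      also have "\<dots> = 1" using assms by simp
      finally show ?thesis by (simp add: abs_mult)
    qed
  qed
  have "real N ^ 2 / 2 = (\<Sum>k<N. \<Sum>l<N. (1/2::real))" by (simp add: power2_eq_square)
  also have "\<dots> \<le> fej N u" unfolding fej_def by (intro sum_mono each) auto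
  finally show ?thesis .
qed

lemma geom_le: fixes r :: real assumes "0 \<le> r" "r < 1" shows "(\<Sum>i<n. r ^ i) \<le> 1 / (1 - r)"
proof -
  have "(\<Sum>i<n. r ^ i) = (1 - r ^ n) / (1 - r)" using assms by (simp add: sum_gp_strict)
  also have "\<dots> \<le> 1 / (1 - r)" using assms by (intro divide_right_mono) auto
  finally show ?thesis .
qed

lemma row_geom:
  fixes \<gamma> :: real assumes "\<gamma> > 0"
  shows "(\<Sum>l<N. exp (- \<gamma> * \<bar>real k - real l\<bar>)) \<le> 2 / (1 - exp (- \<gamma>))"
proof -
  define r where "r = exp (- \<gamma>)"
  have r: "0 \<le> r" "r < 1" using assms by (auto simp: r_def)
  have ex: "exp (- \<gamma> * real m) = r ^ m" for m
    by (simp add: r_def exp_of_nat_mult[symmetric] mult.commute)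
  let ?A = "{l. l < N \<and> l \<le> k}" and ?B = "{l. l < N \<and> k < l}"
  have split: "{..<N} = ?A \<union> ?B" by auto
  have "(\<Sum>l<N. exp (- \<gamma> * \<bar>real k - real l\<bar>)) = (\<Sum>l\<in>?A. exp (- \<gamma> * \<bar>real k - real l\<bar>)) + (\<Sum>l\<in>?B. exp (- \<gamma> * \<bar>real k - real l\<bar>))"
    unfolding split by (rule sum.union_disjoint) auto
  also have "(\<Sum>l\<in>?A. exp (- \<gamma> * \<bar>real k - real l\<bar>)) = (\<Sum>l\<in>?A. r ^ (k - l))"
    by (intro sum.cong refl) (auto simp: ex[symmetric] of_nat_diff)
  also have "\<dots> = (\<Sum>m\<in>(\<lambda>l. k - l) ` ?A. r ^ m)"
    by (rule sum.reindex[symmetric, unfolded comp_def]) (auto simp: inj_on_def)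
  also have "\<dots> \<le> (\<Sum>m<Suc k. r ^ m)"
    using r by (intro sum_mono2) auto
  also have "\<dots> \<le> 1 / (1 - r)" by (rule geom_le[OF r])
  also have "(\<Sum>l\<in>?B. exp (- \<gamma> * \<bar>real k - real l\<bar>)) = (\<Sum>l\<in>?B. r ^ (l - k))"
    by (intro sum.cong refl) (auto simp: ex[symmetric] of_nat_diff)
  also have "\<dots> = (\<Sum>m\<in>(\<lambda>l. l - k) ` ?B. r ^ m)"
    by (rule sum.reindex[symmetric, unfolded comp_def]) (auto simp: inj_on_def)
  also have "\<dots> \<le> (\<Sum>m<N. r ^ m)"
    using r by (intro sum_mono2) auto
  also have "\<dots> \<le> 1 / (1 - r)" by (rule geom_le[OF r])
  finally show ?thesis by (simp add: r_def)
qed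

lemma double_geom:
  fixes \<gamma> :: real assumes "\<gamma> > 0"
  shows "(\<Sum>k<N. \<Sum>l<N. exp (- \<gamma> * \<bar>real k - real l\<bar>)) \<le> real N * (2 / (1 - exp (- \<gamma>)))"
proof -
  have "(\<Sum>k<N. \<Sum>l<N. exp (- \<gamma> * \<bar>real k - real l\<bar>)) \<le> (\<Sum>k<N. 2 / (1 - exp (- \<gamma>)))"
    by (intro sum_mono row_geom assms)
  then show ?thesis by simp
qed




context prob_space begin

lemma esseen2:
  fixes u v :: "'a \<Rightarrow> real" and N1 N2 :: nat and \<gamma> \<epsilon> :: real
  assumes [measurable]: "u \<in> borel_measurable M" "v \<in> borel_measurable M"
    and N: "N1 \<ge> 1" "N2 \<ge> 1" and \<gamma>: "\<gamma> > 0"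
    and bnd: "\<And>k l p q s. k < N1 \<Longrightarrow> l < N1 \<Longrightarrow> p < N2 \<Longrightarrow> q < N2 \<Longrightarrow> s = 1 \<or> s = -1 \<Longrightarrow>
      (LINT \<omega>|M. cos ((real k - real l) * u \<omega> + s * ((real p - real q) * v \<omega>)))
        \<le> exp (- \<gamma> * \<bar>real k - real l\<bar>) * exp (- \<gamma> * \<bar>real p - real q\<bar>) + \<epsilon>"
  shows "measure M {\<omega>\<in>space M. \<bar>u \<omega>\<bar> \<le> 1 / real N1 \<and> (N2 = 1 \<or> \<bar>v \<omega>\<bar> \<le> 1 / real N2)}
    \<le> (real N1 * real N2 * (2 / (1 - exp (- \<gamma>)))\<^sup>2 + (real N1)\<^sup>2 * (real N2)\<^sup>2 * \<epsilon>) / ((real N1)\<^sup>2 * (real N2)\<^sup>2 / 4)"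
proof -
  define S where "S = {\<omega>\<in>space M. \<bar>u \<omega>\<bar> \<le> 1 / real N1 \<and> (N2 = 1 \<or> \<bar>v \<omega>\<bar> \<le> 1 / real N2)}"
  have S[measurable]: "S \<in> sets M" unfolding S_def by measurable
  define L where "L = (real N1)\<^sup>2 * (real N2)\<^sup>2 / 4"
  have L: "L > 0" using N by (simp add: L_def)
  define D where "D = 2 / (1 - exp (- \<gamma>))"
  define T where "T k l p q \<omega> = cos ((real k - real l) * u \<omega>) * cos ((real p - real q) * v \<omega>)" for k l p q \<omega>
  have Tm[measurable]: "T k l p q \<in> borel_measurable M" for k l p q unfolding T_def by measurable
  have intT[simp]: "integrable M (T k l p q)" for k l p q
  proof (rule integrable_const_bound[where B = 1])
    show "AE \<omega> in M. norm (T k l p q \<omega>) \<le> 1"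
      by (rule AE_I2) (simp add: T_def abs_mult mult_le_one)
  qed simp
  define G where "G \<omega> = fej N1 (u \<omega>) * fej N2 (v \<omega>)" for \<omega>
  have Gsum: "G \<omega> = (\<Sum>k<N1. \<Sum>l<N1. \<Sum>p<N2. \<Sum>q<N2. T k l p q \<omega>)" for \<omega>
    unfolding G_def fej_def T_def by (simp only: sum_distrib_right) (simp only: sum_distrib_left)
  have intG: "integrable M G" unfolding Gsum[abs_def] by simp
  have markov: "L * measure M S \<le> integral\<^sup>L M G"
  proof -
    have "L * measure M S = (LINT \<omega>|M. L * indicator S \<omega>)"
      using S by (simp add: Int_absorb2 sets.sets_into_space)
    also have "\<dots> \<le> integral\<^sup>L M G"
    proof (rule integral_mono)
      have "integrable M (indicator S :: 'a \<Rightarrow> real)"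
      proof (rule integrable_const_bound[where B = 1])
        show "AE \<omega> in M. norm (indicator S \<omega> :: real) \<le> 1" by (rule AE_I2) (simp add: indicator_def)
        show "(indicator S :: 'a \<Rightarrow> real) \<in> borel_measurable M" by measurable
      qed
      then show "integrable M (\<lambda>\<omega>. L * indicator S \<omega>)" by (rule integrable_mult_right)
      show "integrable M G" by (rule intG)
      fix \<omega> assume "\<omega> \<in> space M"
      show "L * indicator S \<omega> \<le> G \<omega>"
      proof (cases "\<omega> \<in> S")
        case True
        then have "real N1 ^ 2 / 2 \<le> fej N1 (u \<omega>)" using N by (intro fej_lower) (auto simp: S_def)
        moreover have "real N2 ^ 2 / 2 \<le> fej N2 (v \<omega>)" using N True by (intro fej_lower) (auto simp: S_def)
        ultimately have "real N1 ^ 2 / 2 * (real N2 ^ 2 / 2) \<le> G \<omega>"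
          unfolding G_def by (intro mult_mono) (auto simp: fej_nonneg)
        then show ?thesis using True by (simp add: L_def)
      next
        case False
        then show ?thesis by (simp add: G_def fej_nonneg)
      qed
    qed
    finally show ?thesis .
  qed
  define e where "e k l = exp (- \<gamma> * \<bar>real k - real l\<bar>)" for k l :: nat
  have Tb: "integral\<^sup>L M (T k l p q) \<le> e k l * e p q + \<epsilon>" if "k < N1" "l < N1" "p < N2" "q < N2" for k l p q
  proof -
    have pt: "T k l p q \<omega> = (cos ((real k - real l) * u \<omega> + 1 * ((real p - real q) * v \<omega>))
          + cos ((real k - real l) * u \<omega> + (-1) * ((real p - real q) * v \<omega>))) / 2" for \<omega>
      unfolding T_def by (simp add: cos_add cos_diff)
    have i1: "integrable M (\<lambda>\<omega>. cos ((real k - real l) * u \<omega> + s * ((real p - real q) * v \<omega>)))" for s :: real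
      by (rule integrable_const_bound[where B = 1]) auto
    have "integral\<^sup>L M (T k l p q) = ((LINT \<omega>|M. cos ((real k - real l) * u \<omega> + 1 * ((real p - real q) * v \<omega>)))
        + (LINT \<omega>|M. cos ((real k - real l) * u \<omega> + (-1) * ((real p - real q) * v \<omega>)))) / 2"
      unfolding pt by (simp only: integral_divide_zero Bochner_Integration.integral_add[OF i1 i1])
    also have "\<dots> \<le> ((e k l * e p q + \<epsilon>) + (e k l * e p q + \<epsilon>)) / 2"
      using bnd[OF that, of 1] bnd[OF that, of "-1"] unfolding e_def by (intro divide_right_mono add_mono) auto
    finally show ?thesis by simp
  qed
  have "integral\<^sup>L M G = (\<Sum>k<N1. \<Sum>l<N1. \<Sum>p<N2. \<Sum>q<N2. integral\<^sup>L M (T k l p q))"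
    unfolding Gsum[abs_def] by simp
  also have "\<dots> \<le> (\<Sum>k<N1. \<Sum>l<N1. \<Sum>p<N2. \<Sum>q<N2. e k l * e p q + \<epsilon>)"
    by (intro sum_mono Tb) auto
  also have "\<dots> = (\<Sum>k<N1. \<Sum>l<N1. e k l) * (\<Sum>p<N2. \<Sum>q<N2. e p q) + (real N1)\<^sup>2 * (real N2)\<^sup>2 * \<epsilon>"
  proof -
    have inner: "(\<Sum>p<N2. \<Sum>q<N2. e k l * e p q + \<epsilon>) = e k l * (\<Sum>p<N2. \<Sum>q<N2. e p q) + real N2 * real N2 * \<epsilon>" for k l
      by (simp add: sum.distrib sum_distrib_left)
    have "(\<Sum>k<N1. \<Sum>l<N1. e k l * (\<Sum>p<N2. \<Sum>q<N2. e p q) + real N2 * real N2 * \<epsilon>)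
        = (\<Sum>k<N1. \<Sum>l<N1. e k l) * (\<Sum>p<N2. \<Sum>q<N2. e p q) + real N1 * real N1 * (real N2 * real N2 * \<epsilon>)"
      by (simp add: sum.distrib sum_distrib_right)
    then show ?thesis by (simp add: inner power2_eq_square mult.assoc)
  qed
  also have "\<dots> \<le> (real N1 * D) * (real N2 * D) + (real N1)\<^sup>2 * (real N2)\<^sup>2 * \<epsilon>"
  proof -
    have "(\<Sum>k<N1. \<Sum>l<N1. e k l) \<le> real N1 * D" unfolding e_def D_def by (rule double_geom[OF \<gamma>])
    moreover have "(\<Sum>p<N2. \<Sum>q<N2. e p q) \<le> real N2 * D" unfolding e_def D_def by (rule double_geom[OF \<gamma>])
    moreover have "0 \<le> (\<Sum>p<N2. \<Sum>q<N2. e p q)" unfolding e_def by (intro sum_nonneg) auto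
    moreover have "0 \<le> real N1 * D" using \<gamma> by (simp add: D_def)
    ultimately show ?thesis by (intro add_right_mono mult_mono) auto
  qed
  finally have "L * measure M S \<le> real N1 * real N2 * D\<^sup>2 + (real N1)\<^sup>2 * (real N2)\<^sup>2 * \<epsilon>"
    using markov by (simp add: power2_eq_square algebra_simps)
  then show ?thesis using L unfolding S_def[symmetric] D_def[symmetric] L_def[symmetric]
    by (simp add: field_simps)
qed

end




lemma exp_neg_le: fixes t :: real assumes "t > 0" shows "exp (- t) \<le> 4 / t\<^sup>2"
proof -
  have "1 + t/2 \<le> exp (t/2)" by (rule exp_ge_add_one_self)
  then have "t/2 \<le> exp (t/2)" by linarith
  then have "(t/2)\<^sup>2 \<le> (exp (t/2))\<^sup>2" using assms by (intro power_mono) auto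
  also have "(exp (t/2))\<^sup>2 = exp t" by (simp add: power2_eq_square exp_add[symmetric])
  finally have "t\<^sup>2 / 4 \<le> exp t" by (simp add: power_divide)
  then have "t\<^sup>2 * exp (- t) \<le> 4"
    by (simp add: exp_minus field_simps)
  then show ?thesis using assms by (simp add: field_simps)
qed

lemma int_sq_ge_abs: fixes k l :: nat shows "\<bar>real k - real l\<bar> \<le> (real k - real l)\<^sup>2"
proof (cases "k = l")
  case False
  then have "1 \<le> \<bar>real k - real l\<bar>" by linarith
  then have "\<bar>real k - real l\<bar> * 1 \<le> \<bar>real k - real l\<bar> * \<bar>real k - real l\<bar>" by (intro mult_left_mono) auto
  then show ?thesis by (simp add: power2_eq_square)
qed simp

lemma msqrt:
  fixes n :: nat assumes "n \<ge> 1"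
  defines "m \<equiv> nat \<lceil>sqrt (real n)\<rceil>"
  shows "m \<ge> 1" "real n \<le> (real m)\<^sup>2" "(real m)\<^sup>2 \<le> 4 * real n" "sqrt (real n) \<le> real m"
proof -
  have s1: "sqrt (real n) \<ge> 1" using assms by simp
  have mr: "real m = real_of_int \<lceil>sqrt (real n)\<rceil>" unfolding m_def using s1 by simp
  show sm: "sqrt (real n) \<le> real m" unfolding mr by linarith
  have mu: "real m \<le> 2 * sqrt (real n)" unfolding mr using s1 by linarith
  show "m \<ge> 1" using sm s1 by linarith
  have "(sqrt (real n))\<^sup>2 \<le> (real m)\<^sup>2" using sm s1 by (intro power_mono) auto
  then show "real n \<le> (real m)\<^sup>2" by simp
  have "(real m)\<^sup>2 \<le> (2 * sqrt (real n))\<^sup>2" using mu by (intro power_mono) auto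
  then show "(real m)\<^sup>2 \<le> 4 * real n" by (simp add: power_mult_distrib)
qed

context iid begin

lemma core:
  fixes n N2 :: nat and x y c \<kappa> d0 :: real
  assumes n: "n \<ge> 2" and c: "c > 0" and \<kappa>: "\<kappa> > 0" and d0: "0 < d0" "d0 \<le> 1"
    and cb: "\<And>n \<alpha> \<beta> d. n \<ge> 2 \<Longrightarrow> \<bar>\<alpha>\<bar> \<le> d0 \<Longrightarrow> \<bar>\<beta>\<bar> \<le> d0 \<Longrightarrow>
      (LINT \<omega>|M. cos (d + \<alpha> * second_partial_sum X n \<omega> + \<beta> * partial_sum X n \<omega>))
        \<le> exp (- (c * (real n ^ 3 * \<alpha>\<^sup>2 + real n * \<beta>\<^sup>2)) / 2) + exp (- (\<kappa> * real n) / 2)"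
    and N2: "N2 = 1 \<or> N2 = nat \<lceil>sqrt (real n)\<rceil>"
  defines "m \<equiv> nat \<lceil>sqrt (real n)\<rceil>"
  defines "N1 \<equiv> n * m"
  defines "\<gamma> \<equiv> c * d0\<^sup>2 / 8"
  shows "measure M {\<omega>\<in>space M. \<bar>d0 / real N1 * (second_partial_sum X n \<omega> - x)\<bar> \<le> 1 / real N1 \<and>
            (N2 = 1 \<or> \<bar>d0 / real N2 * (partial_sum X n \<omega> - y)\<bar> \<le> 1 / real N2)}
    \<le> (real N1 * real N2 * (2 / (1 - exp (- \<gamma>)))\<^sup>2 + (real N1)\<^sup>2 * (real N2)\<^sup>2 * exp (- (\<kappa> * real n) / 2))
       / ((real N1)\<^sup>2 * (real N2)\<^sup>2 / 4)"
proof -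
  have n1: "n \<ge> 1" using n by simp
  note ms = msqrt[OF n1, folded m_def]
  have N1: "N1 \<ge> 1" using ms n1 by (simp add: N1_def)
  have N2': "N2 \<ge> 1" using N2 ms by (auto simp: m_def)
  have \<gamma>: "\<gamma> > 0" using c d0 by (simp add: \<gamma>_def)
  have rN1: "real N1 = real n * real m" by (simp add: N1_def)
  show ?thesis
  proof (rule esseen2)
    show "(\<lambda>\<omega>. d0 / real N1 * (second_partial_sum X n \<omega> - x)) \<in> borel_measurable M"
      unfolding second_partial_sum_def partial_sum_def by measurable
    show "(\<lambda>\<omega>. d0 / real N2 * (partial_sum X n \<omega> - y)) \<in> borel_measurable M"
      unfolding partial_sum_def by measurable
    show "1 \<le> N1" "1 \<le> N2" "0 < \<gamma>" using N1 N2' \<gamma> by auto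
    fix k l p q :: nat and s :: real
    assume kl: "k < N1" "l < N1" and pq: "p < N2" "q < N2" and s: "s = 1 \<or> s = -1"
    define \<alpha> where "\<alpha> = (real k - real l) * (d0 / real N1)"
    define \<beta> where "\<beta> = s * ((real p - real q) * (d0 / real N2))"
    have sa: "\<bar>s\<bar> = 1" using s by auto
    have kl': "\<bar>real k - real l\<bar> \<le> real N1" using kl by linarith
    have pq': "\<bar>real p - real q\<bar> \<le> real N2" using pq by linarith
    have a: "\<bar>\<alpha>\<bar> \<le> d0"
    proof -
      have "\<bar>\<alpha>\<bar> = \<bar>real k - real l\<bar> * (d0 / real N1)" using d0 by (simp add: \<alpha>_def abs_mult)
      also have "\<dots> \<le> real N1 * (d0 / real N1)" using kl' d0 by (intro mult_right_mono) auto
      finally show ?thesis using N1 by simp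
    qed
    have b: "\<bar>\<beta>\<bar> \<le> d0"
    proof -
      have "\<bar>\<beta>\<bar> = \<bar>real p - real q\<bar> * (d0 / real N2)" using d0 sa by (simp add: \<beta>_def abs_mult)
      also have "\<dots> \<le> real N2 * (d0 / real N2)" using pq' d0 by (intro mult_right_mono) auto
      finally show ?thesis using N2' by simp
    qed
    have eq: "(real k - real l) * (d0 / real N1 * (second_partial_sum X n \<omega> - x)) +
        s * ((real p - real q) * (d0 / real N2 * (partial_sum X n \<omega> - y)))
      = (- (\<alpha> * x + \<beta> * y)) + \<alpha> * second_partial_sum X n \<omega> + \<beta> * partial_sum X n \<omega>" for \<omega>
      unfolding \<alpha>_def \<beta>_def divide_inverse by algebra
    have Q1: "\<gamma> * \<bar>real k - real l\<bar> \<le> c * (real n ^ 3 * \<alpha>\<^sup>2) / 2"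
    proof -
      have "real n ^ 3 * \<alpha>\<^sup>2 = (real k - real l)\<^sup>2 * d0\<^sup>2 * (real n / (real m)\<^sup>2)"
        using n ms by (simp add: \<alpha>_def rN1 power_mult_distrib power_divide power2_eq_square power3_eq_cube field_simps)
      moreover have "real n / (real m)\<^sup>2 \<ge> 1/4" using ms by (simp add: field_simps)
      ultimately have "real n ^ 3 * \<alpha>\<^sup>2 \<ge> (real k - real l)\<^sup>2 * d0\<^sup>2 * (1/4)"
        by (metis mult_left_mono zero_le_power2 mult_nonneg_nonneg)
      moreover have "\<bar>real k - real l\<bar> * d0\<^sup>2 \<le> (real k - real l)\<^sup>2 * d0\<^sup>2"
        by (intro mult_right_mono int_sq_ge_abs) auto
      ultimately have "\<bar>real k - real l\<bar> * d0\<^sup>2 / 4 \<le> real n ^ 3 * \<alpha>\<^sup>2" by linarith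
      then have "c / 2 * (\<bar>real k - real l\<bar> * d0\<^sup>2 / 4) \<le> c / 2 * (real n ^ 3 * \<alpha>\<^sup>2)"
        using c by (intro mult_left_mono) auto
      then show ?thesis by (simp add: \<gamma>_def field_simps)
    qed
    have Q2: "\<gamma> * \<bar>real p - real q\<bar> \<le> c * (real n * \<beta>\<^sup>2) / 2"
      using N2
    proof
      assume "N2 = 1"
      then have "p = 0" "q = 0" using pq by auto
      then show ?thesis using c by simp
    next
      assume "N2 = nat \<lceil>sqrt (real n)\<rceil>"
      then have N2m: "real N2 = real m" by (simp add: m_def)
      have "real n * \<beta>\<^sup>2 = (real p - real q)\<^sup>2 * d0\<^sup>2 * (real n / (real m)\<^sup>2)"
      proof -
        have b2: "\<beta>\<^sup>2 = ((real p - real q) * (d0 / real m))\<^sup>2" using s by (auto simp: \<beta>_def N2m)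
        show ?thesis unfolding b2 using n ms by (simp add: power_mult_distrib power_divide power2_eq_square field_simps)
      qed
      moreover have "real n / (real m)\<^sup>2 \<ge> 1/4" using ms by (simp add: field_simps)
      ultimately have "real n * \<beta>\<^sup>2 \<ge> (real p - real q)\<^sup>2 * d0\<^sup>2 * (1/4)"
        by (metis mult_left_mono zero_le_power2 mult_nonneg_nonneg)
      moreover have "\<bar>real p - real q\<bar> * d0\<^sup>2 \<le> (real p - real q)\<^sup>2 * d0\<^sup>2"
        by (intro mult_right_mono int_sq_ge_abs) auto
      ultimately have "\<bar>real p - real q\<bar> * d0\<^sup>2 / 4 \<le> real n * \<beta>\<^sup>2" by linarith
      then have "c / 2 * (\<bar>real p - real q\<bar> * d0\<^sup>2 / 4) \<le> c / 2 * (real n * \<beta>\<^sup>2)"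
        using c by (intro mult_left_mono) auto
      then show ?thesis by (simp add: \<gamma>_def field_simps)
    qed
    have "(LINT \<omega>|M. cos ((real k - real l) * (d0 / real N1 * (second_partial_sum X n \<omega> - x)) +
        s * ((real p - real q) * (d0 / real N2 * (partial_sum X n \<omega> - y)))))
      = (LINT \<omega>|M. cos ((- (\<alpha> * x + \<beta> * y)) + \<alpha> * second_partial_sum X n \<omega> + \<beta> * partial_sum X n \<omega>))"
      by (simp only: eq)
    also have "\<dots> \<le> exp (- (c * (real n ^ 3 * \<alpha>\<^sup>2 + real n * \<beta>\<^sup>2)) / 2) + exp (- (\<kappa> * real n) / 2)"
      by (rule cb[OF n a b])
    also have "exp (- (c * (real n ^ 3 * \<alpha>\<^sup>2 + real n * \<beta>\<^sup>2)) / 2) \<le> exp (- \<gamma> * \<bar>real k - real l\<bar>) * exp (- \<gamma> * \<bar>real p - real q\<bar>)"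
    proof -
      have "- (c * (real n ^ 3 * \<alpha>\<^sup>2 + real n * \<beta>\<^sup>2)) / 2 \<le> - \<gamma> * \<bar>real k - real l\<bar> + - \<gamma> * \<bar>real p - real q\<bar>"
        using Q1 Q2 by (simp add: field_simps)
      then show ?thesis by (simp add: exp_add[symmetric])
    qed
    finally show "(LINT \<omega>|M. cos ((real k - real l) * (d0 / real N1 * (second_partial_sum X n \<omega> - x)) +
        s * ((real p - real q) * (d0 / real N2 * (partial_sum X n \<omega> - y)))))
      \<le> exp (- \<gamma> * \<bar>real k - real l\<bar>) * exp (- \<gamma> * \<bar>real p - real q\<bar>) + exp (- (\<kappa> * real n) / 2)"
      by simp
  qed
qed

end




lemma arith_final:
  fixes P Q D \<epsilon> \<kappa> n2 C :: real
  assumes "P > 0" "Q > 0" "Q \<le> P" "0 \<le> \<epsilon>" "\<epsilon> \<le> 16 / (\<kappa>\<^sup>2 * n2)" "Q \<le> n2" "\<kappa> > 0"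
    and "4 * D\<^sup>2 + 64 / \<kappa>\<^sup>2 \<le> C"
  shows "(P * D\<^sup>2 + P\<^sup>2 * \<epsilon>) / (P\<^sup>2 / 4) \<le> C / Q"
proof -
  have "(P * D\<^sup>2 + P\<^sup>2 * \<epsilon>) / (P\<^sup>2 / 4) = 4 * D\<^sup>2 / P + 4 * \<epsilon>"
    using assms by (simp add: field_simps power2_eq_square)
  also have "4 * D\<^sup>2 / P \<le> 4 * D\<^sup>2 / Q" using assms by (intro divide_left_mono) auto
  also have "4 * \<epsilon> \<le> 4 * (16 / (\<kappa>\<^sup>2 * n2))" using assms by simp
  also have "16 / (\<kappa>\<^sup>2 * n2) \<le> 16 / (\<kappa>\<^sup>2 * Q)"
    using assms by (intro divide_left_mono mult_left_mono mult_pos_pos) auto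
  also have "4 * D\<^sup>2 / Q + 4 * (16 / (\<kappa>\<^sup>2 * Q)) = (4 * D\<^sup>2 + 64 / \<kappa>\<^sup>2) / Q"
    using assms by (simp add: field_simps)
  also have "\<dots> \<le> C / Q" using assms by (intro divide_right_mono) auto
  finally show ?thesis by simp
qed

context iid begin

lemma final: "\<exists>C::real. \<forall>n\<ge>1.
     (\<forall>x y. measure M {\<omega>\<in>space M. \<bar>second_partial_sum X n \<omega> - x\<bar> \<le> 1 \<and> \<bar>partial_sum X n \<omega> - y\<bar> \<le> 1}
            \<le> C / (real n)\<^sup>2)
   \<and> (\<forall>x. measure M {\<omega>\<in>space M. \<bar>second_partial_sum X n \<omega> - x\<bar> \<le> 1} \<le> C / (real n) powr (3/2))"
proof -
  obtain c \<kappa> d0 where c: "c > 0" and \<kappa>: "\<kappa> > 0" and d0: "0 < d0" "d0 \<le> 1"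
    and cb: "\<And>n \<alpha> \<beta> d. n \<ge> 2 \<Longrightarrow> \<bar>\<alpha>\<bar> \<le> d0 \<Longrightarrow> \<bar>\<beta>\<bar> \<le> d0 \<Longrightarrow>
      (LINT \<omega>|M. cos (d + \<alpha> * second_partial_sum X n \<omega> + \<beta> * partial_sum X n \<omega>))
        \<le> exp (- (c * (real n ^ 3 * \<alpha>\<^sup>2 + real n * \<beta>\<^sup>2)) / 2) + exp (- (\<kappa> * real n) / 2)"
    using char_bound by blast
  define \<gamma> where "\<gamma> = c * d0\<^sup>2 / 8"
  define D where "D = 2 / (1 - exp (- \<gamma>))"
  define C where "C = max 1 (4 * D\<^sup>2 + 64 / \<kappa>\<^sup>2)"
  have C1: "1 \<le> C" and C2: "4 * D\<^sup>2 + 64 / \<kappa>\<^sup>2 \<le> C" by (auto simp: C_def)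
  have meas_S2[measurable]: "second_partial_sum X n \<in> borel_measurable M" for n
    unfolding second_partial_sum_def partial_sum_def by measurable
  have meas_S[measurable]: "partial_sum X n \<in> borel_measurable M" for n
    unfolding partial_sum_def by measurable
  have "\<forall>n\<ge>1. (\<forall>x y. measure M {\<omega>\<in>space M. \<bar>second_partial_sum X n \<omega> - x\<bar> \<le> 1 \<and> \<bar>partial_sum X n \<omega> - y\<bar> \<le> 1}
            \<le> C / (real n)\<^sup>2)
   \<and> (\<forall>x. measure M {\<omega>\<in>space M. \<bar>second_partial_sum X n \<omega> - x\<bar> \<le> 1} \<le> C / (real n) powr (3/2))"
  proof (intro allI impI)
    fix n :: nat assume n1: "n \<ge> 1"
    show "(\<forall>x y. measure M {\<omega>\<in>space M. \<bar>second_partial_sum X n \<omega> - x\<bar> \<le> 1 \<and> \<bar>partial_sum X n \<omega> - y\<bar> \<le> 1}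
            \<le> C / (real n)\<^sup>2)
   \<and> (\<forall>x. measure M {\<omega>\<in>space M. \<bar>second_partial_sum X n \<omega> - x\<bar> \<le> 1} \<le> C / (real n) powr (3/2))"
    proof (rule conjI)
    show "\<forall>x y. measure M {\<omega>\<in>space M. \<bar>second_partial_sum X n \<omega> - x\<bar> \<le> 1 \<and> \<bar>partial_sum X n \<omega> - y\<bar> \<le> 1}
            \<le> C / (real n)\<^sup>2"
    proof (intro allI)
      fix x y
      show "measure M {\<omega>\<in>space M. \<bar>second_partial_sum X n \<omega> - x\<bar> \<le> 1 \<and> \<bar>partial_sum X n \<omega> - y\<bar> \<le> 1}
            \<le> C / (real n)\<^sup>2"
      proof (cases "n = 1")
        case True
        have "measure M {\<omega>\<in>space M. \<bar>second_partial_sum X n \<omega> - x\<bar> \<le> 1 \<and> \<bar>partial_sum X n \<omega> - y\<bar> \<le> 1} \<le> 1"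
          by (rule prob_le_1)
        moreover have "C / (real n)\<^sup>2 = C" using True by simp
        ultimately show ?thesis using C1 by linarith
      next
        case False
        then have n: "n \<ge> 2" using n1 by simp
        define m where "m = nat \<lceil>sqrt (real n)\<rceil>"
        define N1 where "N1 = n * m"
        note ms = msqrt[OF n1, folded m_def]
        have N1r: "real N1 = real n * real m" by (simp add: N1_def)
        have pos: "real N1 > 0" "real m > 0" using ms n1 by (auto simp: N1r)
        let ?B = "{\<omega>\<in>space M. \<bar>d0 / real N1 * (second_partial_sum X n \<omega> - x)\<bar> \<le> 1 / real N1 \<and>
            (m = 1 \<or> \<bar>d0 / real m * (partial_sum X n \<omega> - y)\<bar> \<le> 1 / real m)}"
        have sub: "{\<omega>\<in>space M. \<bar>second_partial_sum X n \<omega> - x\<bar> \<le> 1 \<and> \<bar>partial_sum X n \<omega> - y\<bar> \<le> 1} \<subseteq> ?B"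
        proof
          fix \<omega> assume "\<omega> \<in> {\<omega>\<in>space M. \<bar>second_partial_sum X n \<omega> - x\<bar> \<le> 1 \<and> \<bar>partial_sum X n \<omega> - y\<bar> \<le> 1}"
          then have sp: "\<omega> \<in> space M" and h: "\<bar>second_partial_sum X n \<omega> - x\<bar> \<le> 1" "\<bar>partial_sum X n \<omega> - y\<bar> \<le> 1" by auto
          have "\<bar>d0 / real N1 * (second_partial_sum X n \<omega> - x)\<bar> = d0 / real N1 * \<bar>second_partial_sum X n \<omega> - x\<bar>"
            using d0 pos by (simp add: abs_mult)
          also have "\<dots> \<le> 1 / real N1 * 1" using d0 pos h by (intro mult_mono divide_right_mono) auto
          finally have A: "\<bar>d0 / real N1 * (second_partial_sum X n \<omega> - x)\<bar> \<le> 1 / real N1" by simp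
          have "\<bar>d0 / real m * (partial_sum X n \<omega> - y)\<bar> = d0 / real m * \<bar>partial_sum X n \<omega> - y\<bar>"
            using d0 pos by (simp add: abs_mult)
          also have "\<dots> \<le> 1 / real m * 1" using d0 pos h by (intro mult_mono divide_right_mono) auto
          finally have B: "\<bar>d0 / real m * (partial_sum X n \<omega> - y)\<bar> \<le> 1 / real m" by simp
          show "\<omega> \<in> ?B" using sp A B by simp
        qed
        have "measure M {\<omega>\<in>space M. \<bar>second_partial_sum X n \<omega> - x\<bar> \<le> 1 \<and> \<bar>partial_sum X n \<omega> - y\<bar> \<le> 1}
            \<le> measure M ?B"
          by (rule finite_measure_mono[OF sub]) measurable
        also have "\<dots> \<le> (real N1 * real m * D\<^sup>2 + (real N1)\<^sup>2 * (real m)\<^sup>2 * exp (- (\<kappa> * real n) / 2))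
           / ((real N1)\<^sup>2 * (real m)\<^sup>2 / 4)"
          using core[OF n c \<kappa> d0 cb, of m x y] unfolding m_def N1_def \<gamma>_def D_def by simp
        also have "\<dots> \<le> C / (real n)\<^sup>2"
        proof -
          have "(real N1 * real m * D\<^sup>2 + (real N1)\<^sup>2 * (real m)\<^sup>2 * exp (- (\<kappa> * real n) / 2))
              / ((real N1)\<^sup>2 * (real m)\<^sup>2 / 4)
            = ((real N1 * real m) * D\<^sup>2 + (real N1 * real m)\<^sup>2 * exp (- (\<kappa> * real n) / 2))
              / ((real N1 * real m)\<^sup>2 / 4)" by (simp add: power_mult_distrib)
          also have "\<dots> \<le> C / (real n)\<^sup>2"
          proof (rule arith_final[OF _ _ _ _ _ _ \<kappa> C2])
            show "0 < real N1 * real m" using pos by simp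
            show "0 < (real n)\<^sup>2" using n1 by simp
            have "real n * real n \<le> real n * (real m)\<^sup>2" using ms n1 by (intro mult_left_mono) auto
            then show "(real n)\<^sup>2 \<le> real N1 * real m" by (simp add: N1r power2_eq_square mult.assoc)
            show "0 \<le> exp (- (\<kappa> * real n) / 2)" by simp
            have "exp (- (\<kappa> * real n / 2)) \<le> 4 / (\<kappa> * real n / 2)\<^sup>2"
              using \<kappa> n1 by (intro exp_neg_le) auto
            then show "exp (- (\<kappa> * real n) / 2) \<le> 16 / (\<kappa>\<^sup>2 * (real n)\<^sup>2)"
              by (simp add: power_divide power_mult_distrib field_simps)
            show "(real n)\<^sup>2 \<le> (real n)\<^sup>2" by simp
          qed
          finally show ?thesis .
        qed
        finally show ?thesis .
      qed
    qed
    show "\<forall>x. measure M {\<omega>\<in>space M. \<bar>second_partial_sum X n \<omega> - x\<bar> \<le> 1} \<le> C / (real n) powr (3/2)"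
    proof (intro allI)
      fix x
      have pw: "real n powr (3/2) = real n * sqrt (real n)"
      proof -
        have "real n powr (3/2) = real n powr (1 + 1/2)" by simp
        also have "\<dots> = real n powr 1 * real n powr (1/2)" by (rule powr_add)
        also have "\<dots> = real n * sqrt (real n)" using n1 by (simp add: powr_half_sqrt)
        finally show ?thesis .
      qed
      show "measure M {\<omega>\<in>space M. \<bar>second_partial_sum X n \<omega> - x\<bar> \<le> 1} \<le> C / (real n) powr (3/2)"
      proof (cases "n = 1")
        case True
        have "measure M {\<omega>\<in>space M. \<bar>second_partial_sum X n \<omega> - x\<bar> \<le> 1} \<le> 1"
          by (rule prob_le_1)
        moreover have "C / (real n) powr (3/2) = C" using True by simp
        ultimately show ?thesis using C1 by linarith
      next
        case False
        then have n: "n \<ge> 2" using n1 by simp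
        define m where "m = nat \<lceil>sqrt (real n)\<rceil>"
        define N1 where "N1 = n * m"
        note ms = msqrt[OF n1, folded m_def]
        have N1r: "real N1 = real n * real m" by (simp add: N1_def)
        have pos: "real N1 > 0" "real m > 0" using ms n1 by (auto simp: N1r)
        let ?B = "{\<omega>\<in>space M. \<bar>d0 / real N1 * (second_partial_sum X n \<omega> - x)\<bar> \<le> 1 / real N1 \<and>
            ((1::nat) = 1 \<or> \<bar>d0 / real (1::nat) * (partial_sum X n \<omega> - 0)\<bar> \<le> 1 / real (1::nat))}"
        have sub: "{\<omega>\<in>space M. \<bar>second_partial_sum X n \<omega> - x\<bar> \<le> 1} \<subseteq> ?B"
        proof safe
          fix \<omega> assume h: "\<bar>second_partial_sum X n \<omega> - x\<bar> \<le> 1"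
          have "\<bar>d0 / real N1 * (second_partial_sum X n \<omega> - x)\<bar> = d0 / real N1 * \<bar>second_partial_sum X n \<omega> - x\<bar>"
            using d0 pos by (simp add: abs_mult)
          also have "\<dots> \<le> 1 / real N1 * 1" using d0 pos h by (intro mult_mono divide_right_mono) auto
          finally show "\<bar>d0 / real N1 * (second_partial_sum X n \<omega> - x)\<bar> \<le> 1 / real N1" by simp
        qed
        have "measure M {\<omega>\<in>space M. \<bar>second_partial_sum X n \<omega> - x\<bar> \<le> 1} \<le> measure M ?B"
          by (rule finite_measure_mono[OF sub]) measurable
        also have "\<dots> \<le> (real N1 * real (1::nat) * D\<^sup>2 + (real N1)\<^sup>2 * (real (1::nat))\<^sup>2 * exp (- (\<kappa> * real n) / 2))
           / ((real N1)\<^sup>2 * (real (1::nat))\<^sup>2 / 4)"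
          using core[OF n c \<kappa> d0 cb, of 1 x 0] unfolding m_def N1_def \<gamma>_def D_def by blast
        also have "\<dots> = (real N1 * D\<^sup>2 + (real N1)\<^sup>2 * exp (- (\<kappa> * real n) / 2)) / ((real N1)\<^sup>2 / 4)" by simp
        also have "\<dots> \<le> C / (real n) powr (3/2)"
        proof (rule arith_final[OF _ _ _ _ _ _ \<kappa> C2])
          show "0 < real N1" using pos by simp
          show "0 < real n powr (3/2)" using n1 by simp
          show "real n powr (3/2) \<le> real N1" unfolding pw N1r using ms n1 by (intro mult_left_mono) auto
          show "0 \<le> exp (- (\<kappa> * real n) / 2)" by simp
          have "exp (- (\<kappa> * real n / 2)) \<le> 4 / (\<kappa> * real n / 2)\<^sup>2"
            using \<kappa> n1 by (intro exp_neg_le) auto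
          then show "exp (- (\<kappa> * real n) / 2) \<le> 16 / (\<kappa>\<^sup>2 * (real n)\<^sup>2)"
            by (simp add: power_divide power_mult_distrib field_simps)
          have s1: "1 \<le> sqrt (real n)" using n1 by simp
          then have "sqrt (real n) * 1 \<le> sqrt (real n) * sqrt (real n)" by (intro mult_left_mono) auto
          then have "sqrt (real n) \<le> real n" by simp
          then have "real n * sqrt (real n) \<le> real n * real n" by (intro mult_left_mono) auto
          then show "real n powr (3/2) \<le> (real n)\<^sup>2" unfolding pw by (simp add: power2_eq_square)
        qed
        finally show ?thesis .
      qed
    qed
    qed
  qed
  then show ?thesis by blast
qed

end


theorem lemma5:
  fixes M :: "'a measure" and X :: "nat \<Rightarrow> 'a \<Rightarrow> real"
  assumes "prob_space M"
    and rv: "\<And>i. X i \<in> borel_measurable M"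
    and indep: "prob_space.indep_vars M (\<lambda>_. borel) X UNIV"
    and ident: "\<And>i. distr M borel (X i) = distr M borel (X 0)"
    and int1: "integrable M (X 0)"
    and mean0: "integral\<^sup>L M (X 0) = 0"
    and int2: "integrable M (\<lambda>\<omega>. (X 0 \<omega>)\<^sup>2)"
    and var1: "integral\<^sup>L M (\<lambda>\<omega>. (X 0 \<omega>)\<^sup>2) = 1"
  shows "\<exists>C::real. \<forall>n\<ge>1.
     (\<forall>x y. measure M {\<omega>\<in>space M. \<bar>second_partial_sum X n \<omega> - x\<bar> \<le> 1 \<and> \<bar>partial_sum X n \<omega> - y\<bar> \<le> 1}
            \<le> C / (real n)\<^sup>2)
   \<and> (\<forall>x. measure M {\<omega>\<in>space M. \<bar>second_partial_sum X n \<omega> - x\<bar> \<le> 1} \<le> C / (real n) powr (3/2))"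
  proof -
  interpret iid M X
  proof (rule iid.intro)
    show "prob_space M" by (rule assms(1))
    show "iid_axioms M X"
    proof (rule iid_axioms.intro)
      show "\<And>i. X i \<in> borel_measurable M" by (rule rv)
      show "prob_space.indep_vars M (\<lambda>_. borel) X UNIV" by (rule indep)
      show "\<And>i. distr M borel (X i) = distr M borel (X 0)" by (rule ident)
      show "integrable M (X 0)" by (rule int1)
      show "integral\<^sup>L M (X 0) = 0" by (rule mean0)
      show "integrable M (\<lambda>\<omega>. (X 0 \<omega>)\<^sup>2)" by (rule int2)
      show "integral\<^sup>L M (\<lambda>\<omega>. (X 0 \<omega>)\<^sup>2) = 1" by (rule var1)
    qed
  qed
  show ?thesis by (rule final)
qed

end
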